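(* Let $\mu$ be a Borel probability measure on $\mathbb{R}^d$ with compact support and a $C^1$ density, let $\rho\in(0,1)$, let $X_1,X_2,\dots$ be i.i.d. with law $\mu$, and $\mu_n=\frac1n\sum_{i=1}^n\delta_{X_i}$. Then almost surely, as $n\to\infty$, \[ \sup_{i=1,\dots,n}\big|\sigma^*_{\rho,\mu_n}(X_i)-\sigma^*_{\rho,\mu}(X_i)\big|\to0. \]
   Context: For a probability measure $\mu$ on $\mathbb{R}^d$: $F_{\rho,\mu}(x,\sigma)=\int w_{x,\sigma}(x')\log w_{x,\sigma}(x')\,d\mu(x')+\log\rho$ with $w_{x,\sigma}(x')=\exp(-\|x-x'\|^2/2\sigma^2)/\int\exp(-\|x-z\|^2/2\sigma^2)\,d\mu(z)$, and $\sigma^*_{\rho,\mu}(x)$ denotes the positive solution $\sigma$ of $F_{\rho,\mu}(x,\sigma)=0$ (similarly for $\mu_n$). *)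

theory Defs
  imports "HOL-Probability.Probability"
begin

definition gauss_w :: "'a::euclidean_space measure \<Rightarrow> 'a \<Rightarrow> real \<Rightarrow> 'a \<Rightarrow> real" where
  "gauss_w \<nu> x \<sigma> x' =
     exp (- (norm (x - x'))\<^sup>2 / (2 * \<sigma>\<^sup>2)) /
     (\<integral>z. exp (- (norm (x - z))\<^sup>2 / (2 * \<sigma>\<^sup>2)) \<partial>\<nu>)"

definition F_fun :: "real \<Rightarrow> 'a::euclidean_space measure \<Rightarrow> 'a \<Rightarrow> real \<Rightarrow> real" where
  "F_fun \<rho> \<nu> x \<sigma> = (\<integral>x'. gauss_w \<nu> x \<sigma> x' * ln (gauss_w \<nu> x \<sigma> x') \<partial>\<nu>) + ln \<rho>"

definition sigma_star :: "real \<Rightarrow> 'a::euclidean_space measure \<Rightarrow> 'a \<Rightarrow> real" where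
  "sigma_star \<rho> \<nu> x = (THE \<sigma>. \<sigma> > 0 \<and> F_fun \<rho> \<nu> x \<sigma> = 0)"

definition emp_measure :: "(nat \<Rightarrow> 'a) \<Rightarrow> nat \<Rightarrow> 'a measure" where
  "emp_measure xs n = measure_pmf (pmf_of_multiset (mset (map xs [0..<n])))"

definition C1_real :: "('a::euclidean_space \<Rightarrow> real) \<Rightarrow> bool" where
  "C1_real f \<longleftrightarrow> (\<exists>f' :: 'a \<Rightarrow> 'a \<Rightarrow>\<^sub>L real.
      (\<forall>x. (f has_derivative blinfun_apply (f' x)) (at x)) \<and> continuous_on UNIV f')"

end

theory Submission
  imports Defs
begin
lemma unif_approx:
  fixes H :: "('c::metric_space \<times> 'a::metric_space) \<Rightarrow> real"
  assumes "compact \<Theta>" "compact K" "continuous_on (\<Theta> \<times> K) H" "e > 0"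
  shows "\<exists>d>0. \<forall>t\<in>\<Theta>. \<forall>t'\<in>\<Theta>. dist t t' < d \<longrightarrow> (\<forall>z\<in>K. \<bar>H (t,z) - H (t',z)\<bar> < e)"
proof -
  have "uniformly_continuous_on (\<Theta> \<times> K) H"
    using assms by (intro compact_uniformly_continuous compact_Times) auto
  then obtain d where d: "d > 0" "\<And>x x'. x \<in> \<Theta> \<times> K \<Longrightarrow> x' \<in> \<Theta> \<times> K \<Longrightarrow> dist x' x < d \<Longrightarrow> dist (H x') (H x) < e"
    using assms(4) unfolding uniformly_continuous_on_def by metis
  show ?thesis
  proof (intro exI[of _ d] conjI ballI impI d)
    fix t t' z assume "t \<in> \<Theta>" "t' \<in> \<Theta>" "dist t t' < d" "z \<in> K"
    then have "dist (H (t,z)) (H (t',z)) < e"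
      by (intro d(2)) (auto simp: dist_Pair_Pair)
    then show "\<bar>H (t,z) - H (t',z)\<bar> < e" by (simp add: dist_real_def)
  qed
qed

definition ZB :: "'a::euclidean_space measure \<Rightarrow> 'a \<Rightarrow> real \<Rightarrow> real" where
  "ZB M x b = (\<integral>z. exp (- b * (norm (x - z))\<^sup>2) \<partial>M)"
definition AB :: "'a::euclidean_space measure \<Rightarrow> 'a \<Rightarrow> real \<Rightarrow> real" where
  "AB M x b = (\<integral>z. (norm (x - z))\<^sup>2 * exp (- b * (norm (x - z))\<^sup>2) \<partial>M)"
definition FB :: "'a::euclidean_space measure \<Rightarrow> 'a \<Rightarrow> real \<Rightarrow> real" where
  "FB M x b = - b * AB M x b / ZB M x b - ln (ZB M x b)"

locale gm = prob_space M for M :: "'a::euclidean_space measure" +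
  fixes K :: "'a set"
  assumes meas: "\<And>h::'a\<Rightarrow>real. h \<in> borel_measurable borel \<Longrightarrow> h \<in> borel_measurable M"
  assumes sb: "\<And>A. A \<in> sets borel \<Longrightarrow> A \<in> sets M"
  assumes cK: "compact K"
  assumes aeK: "AE z in M. z \<in> K"
begin

lemma integrable_cont:
  fixes h :: "'a \<Rightarrow> real"
  assumes "continuous_on UNIV h"
  shows "integrable M h"
proof -
  have "bounded (h ` K)"
    using assms cK by (intro compact_imp_bounded compact_continuous_image) (auto intro: continuous_on_subset)
  then obtain C where C: "\<And>z. z \<in> K \<Longrightarrow> norm (h z) \<le> C"
    unfolding bounded_iff by auto
  show ?thesis
  proof (rule Bochner_Integration.integrable_bound[where f="\<lambda>_. C"])
    show "integrable M (\<lambda>_. C)" by simp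
    show "h \<in> borel_measurable M"
      using assms by (intro meas borel_measurable_continuous_onI)
    show "AE z in M. norm (h z) \<le> norm C"
      using aeK by eventually_elim (metis C abs_ge_self order_trans real_norm_def)
  qed
qed


lemma int_e: "integrable M (\<lambda>z. exp (- b * (norm (x - z))\<^sup>2))"
  by (intro integrable_cont continuous_intros)
lemma int_De: "integrable M (\<lambda>z. (norm (x - z))\<^sup>2 * exp (- b * (norm (x - z))\<^sup>2))"
  by (intro integrable_cont continuous_intros)
lemma int_e'[simp]: "integrable M (\<lambda>z. exp (- (b * (norm (x - z))\<^sup>2)))"
  by (intro integrable_cont continuous_intros)
lemma int_De'[simp]: "integrable M (\<lambda>z. (norm (x - z))\<^sup>2 * exp (- (b * (norm (x - z))\<^sup>2)))"
  by (intro integrable_cont continuous_intros)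
lemma meas_D[measurable]: "(\<lambda>z. (norm (x - z))\<^sup>2) \<in> borel_measurable M"
  by (intro meas borel_measurable_continuous_onI continuous_intros)

lemma ZB_pos: "0 < ZB M x b"
  unfolding ZB_def by (rule expectation_greater[OF int_e]) auto

lemma AB_nonneg: "0 \<le> AB M x b"
  unfolding AB_def by (rule integral_nonneg_AE) auto

lemma FB_mono_aux:
  fixes x :: 'a
  assumes b1: "0 \<le> b1" and b12: "b1 \<le> b2"
  defines "m1 \<equiv> AB M x b1 / ZB M x b1" and "m2 \<equiv> AB M x b2 / ZB M x b2"
  shows "ln (ZB M x b1) \<ge> (b2 - b1) * m2 + ln (ZB M x b2)"
    and "AB M x b2 - m1 * ZB M x b2 = (\<integral>z. ((norm (x - z))\<^sup>2 - m1) * (exp (- (b2 - b1) * (norm (x - z))\<^sup>2) - exp (- (b2 - b1) * m1)) * exp (- b1 * (norm (x - z))\<^sup>2) \<partial>M)"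
    and "AB M x b2 - m1 * ZB M x b2 \<le> 0"
    and "m2 \<le> m1"
proof -
  define c where "c = b2 - b1"
  have c: "c \<ge> 0" using b12 by (simp add: c_def)
  note Zp = ZB_pos[of x b1] ZB_pos[of x b2]
  define D where "D z = (norm (x - z))\<^sup>2" for z
  have e2: "exp (- b2 * D z) = exp (- c * D z) * exp (- b1 * D z)" for z
    by (simp add: c_def exp_add[symmetric] algebra_simps)
  have e1: "exp (- b1 * D z) = exp (c * D z) * exp (- b2 * D z)" for z
    by (simp add: c_def exp_add[symmetric] algebra_simps)
  have pw1: "exp (c * m2) * (exp (- b2 * D z) + c * (D z * exp (- b2 * D z)) - (c * m2) * exp (- b2 * D z)) \<le> exp (- b1 * D z)" for z
  proof -
    have "exp (c * m2) * (1 + c * (D z - m2)) \<le> exp (c * m2) * exp (c * (D z - m2))"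
      by (intro mult_left_mono exp_ge_add_one_self) auto
    also have "\<dots> = exp (c * D z)" by (simp add: exp_add[symmetric] algebra_simps)
    finally have "exp (c * m2) * (1 + c * (D z - m2)) * exp (- b2 * D z) \<le> exp (c * D z) * exp (- b2 * D z)"
      by (intro mult_right_mono) auto
    then show ?thesis unfolding e1 by (simp add: algebra_simps)
  qed
  have "(\<integral>z. exp (c * m2) * (exp (- b2 * D z) + c * (D z * exp (- b2 * D z)) - (c * m2) * exp (- b2 * D z)) \<partial>M) \<le> (\<integral>z. exp (- b1 * D z) \<partial>M)"
    by (intro integral_mono pw1) (auto simp: D_def intro!: integrable_cont continuous_intros)
  also have "(\<integral>z. exp (c * m2) * (exp (- b2 * D z) + c * (D z * exp (- b2 * D z)) - (c * m2) * exp (- b2 * D z)) \<partial>M)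
     = exp (c * m2) * (ZB M x b2 + c * AB M x b2 - c * m2 * ZB M x b2)"
    by (simp add: D_def ZB_def AB_def int_e int_De integral_add integral_diff)
  also have "\<dots> = exp (c * m2) * ZB M x b2"
    using Zp by (simp add: m2_def)
  finally have i: "exp (c * m2) * ZB M x b2 \<le> ZB M x b1" by (simp add: ZB_def D_def)
  have "ln (exp (c * m2) * ZB M x b2) \<le> ln (ZB M x b1)"
    using i Zp by (subst ln_le_cancel_iff) auto
  then show "ln (ZB M x b1) \<ge> (b2 - b1) * m2 + ln (ZB M x b2)"
    using Zp by (simp add: ln_mult c_def)
  have pw2: "(D z - m1) * (exp (- c * D z) - exp (- c * m1)) * exp (- b1 * D z) \<le> 0" for z
  proof -
    have "(D z - m1) * (exp (- c * D z) - exp (- c * m1)) \<le> 0"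
    proof (cases "D z \<le> m1")
      case True
      then have "exp (- c * m1) \<le> exp (- c * D z)" using c by (simp add: mult_left_mono)
      then show ?thesis using True by (simp add: mult_nonpos_nonneg)
    next
      case False
      then have "exp (- c * D z) \<le> exp (- c * m1)" using c by (simp add: mult_left_mono)
      then show ?thesis using False by (simp add: mult_nonneg_nonpos)
    qed
    then show ?thesis by (simp add: mult_nonpos_nonneg)
  qed
  have eq: "(D z - m1) * (exp (- c * D z) - exp (- c * m1)) * exp (- b1 * D z)
     = (D z * exp (- b2 * D z) - m1 * exp (- b2 * D z)) - exp (- c * m1) * (D z * exp (- b1 * D z) - m1 * exp (- b1 * D z))" for z
  proof -
    have e2': "exp (- (b2 * D z)) = exp (- (c * D z)) * exp (- (b1 * D z))"
      using e2[of z] by simp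
    show ?thesis by (simp add: e2' algebra_simps)
  qed
  have "(\<integral>z. (D z - m1) * (exp (- c * D z) - exp (- c * m1)) * exp (- b1 * D z) \<partial>M)
     = (AB M x b2 - m1 * ZB M x b2) - exp (- c * m1) * (AB M x b1 - m1 * ZB M x b1)"
    unfolding eq by (simp add: D_def ZB_def AB_def int_e int_De integral_add integral_diff)
  also have "AB M x b1 - m1 * ZB M x b1 = 0" using Zp by (simp add: m1_def)
  finally have eqI: "(\<integral>z. (D z - m1) * (exp (- c * D z) - exp (- c * m1)) * exp (- b1 * D z) \<partial>M) = AB M x b2 - m1 * ZB M x b2"
    by simp
  then show "AB M x b2 - m1 * ZB M x b2 = (\<integral>z. ((norm (x - z))\<^sup>2 - m1) * (exp (- (b2 - b1) * (norm (x - z))\<^sup>2) - exp (- (b2 - b1) * m1)) * exp (- b1 * (norm (x - z))\<^sup>2) \<partial>M)"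
    by (simp add: D_def c_def)
  have "(\<integral>z. (D z - m1) * (exp (- c * D z) - exp (- c * m1)) * exp (- b1 * D z) \<partial>M) \<le> 0"
  proof (rule integral_le_const)
    show "integrable M (\<lambda>z. (D z - m1) * (exp (- c * D z) - exp (- c * m1)) * exp (- b1 * D z))"
      by (auto simp: D_def intro!: integrable_cont continuous_intros)
  qed (use pw2 in auto)
  then show ii: "AB M x b2 - m1 * ZB M x b2 \<le> 0" using eqI by simp
  then show "m2 \<le> m1" using Zp by (simp add: m2_def divide_simps)
qed


lemma FB_eq: "FB M x b = - b * (AB M x b / ZB M x b) - ln (ZB M x b)"
  unfolding FB_def by simp

lemma FB_mono:
  fixes x :: 'a
  assumes b1: "0 \<le> b1" and b12: "b1 \<le> b2"
  shows "FB M x b1 \<le> FB M x b2"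
proof -
  note A = FB_mono_aux[OF b1 b12, of x]
  define p where "p = AB M x b2 / ZB M x b2"
  define q where "q = AB M x b1 / ZB M x b1"
  have "- b1 * q \<le> - b1 * p"
    using A(4) b1 by (intro mult_left_mono_neg) (auto simp: p_def q_def)
  moreover have "(b2 - b1) * p = b2 * p - b1 * p" by (simp add: algebra_simps)
  ultimately show ?thesis unfolding FB_eq p_def[symmetric] q_def[symmetric] using A(1)[folded p_def] by linarith
qed

lemma FB_strict:
  fixes x :: 'a
  assumes b1: "0 < b1" and b12: "b1 < b2" and nz: "FB M x b1 \<noteq> 0"
  shows "FB M x b1 < FB M x b2"
proof -
  define m1 where "m1 = AB M x b1 / ZB M x b1"
  define c where "c = b2 - b1"
  have c: "c > 0" using b12 by (simp add: c_def)
  note A = FB_mono_aux[OF less_imp_le[OF b1] less_imp_le[OF b12], of x]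
  define k where "k z = ((norm (x - z))\<^sup>2 - m1) * (exp (- c * (norm (x - z))\<^sup>2) - exp (- c * m1)) * exp (- b1 * (norm (x - z))\<^sup>2)" for z
  have kle: "k z \<le> 0" for z
  proof -
    have "((norm (x - z))\<^sup>2 - m1) * (exp (- c * (norm (x - z))\<^sup>2) - exp (- c * m1)) \<le> 0"
    proof (cases "(norm (x - z))\<^sup>2 \<le> m1")
      case True
      then have "exp (- c * m1) \<le> exp (- c * (norm (x - z))\<^sup>2)" using c by (simp add: mult_left_mono)
      then show ?thesis using True by (simp add: mult_nonpos_nonneg)
    next
      case False
      then have "exp (- c * (norm (x - z))\<^sup>2) \<le> exp (- c * m1)" using c by (simp add: mult_left_mono)
      then show ?thesis using False by (simp add: mult_nonneg_nonpos)
    qed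
    then show ?thesis unfolding k_def by (simp add: mult_nonpos_nonneg)
  qed
  have kne: "k z \<noteq> 0" if "(norm (x - z))\<^sup>2 \<noteq> m1" for z
  proof -
    have "exp (- c * (norm (x - z))\<^sup>2) \<noteq> exp (- c * m1)" using that c by simp
    then show ?thesis using that unfolding k_def by simp
  qed
  have ik: "integrable M k" unfolding k_def by (auto intro!: integrable_cont continuous_intros)
  have neg: "AB M x b2 - m1 * ZB M x b2 < 0"
  proof (cases "AE z in M. (norm (x - z))\<^sup>2 = m1")
    case True
    have Z1: "ZB M x b1 = exp (- b1 * m1)"
      unfolding ZB_def using True by (subst integral_cong_AE[where g="\<lambda>_. exp (- b1 * m1)"]) (auto simp: prob_space)
    have A1: "AB M x b1 = m1 * exp (- b1 * m1)"
      unfolding AB_def using True by (subst integral_cong_AE[where g="\<lambda>_. m1 * exp (- b1 * m1)"]) (auto simp: prob_space)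
    have "FB M x b1 = 0" unfolding FB_eq Z1 A1 by simp
    with nz show ?thesis by simp
  next
    case False
    define S where "S = {z\<in>space M. (norm (x - z))\<^sup>2 \<noteq> m1}"
    have S: "S \<in> sets M" unfolding S_def by measurable
    have "emeasure M S \<noteq> 0"
      using False AE_iff_measurable[OF S, of "\<lambda>z. (norm (x - z))\<^sup>2 = m1"] by (auto simp: S_def)
    then have "integral\<^sup>L M k < integral\<^sup>L M (\<lambda>_. 0)"
      by (intro integral_less_AE[OF ik _ _ S]) (auto simp: S_def kle kne)
    moreover have "integral\<^sup>L M k = AB M x b2 - m1 * ZB M x b2"
      unfolding k_def m1_def c_def using A(2) by simp
    ultimately show ?thesis by simp
  qed
  have Zp: "ZB M x b2 > 0" by (rule ZB_pos)
  have m: "AB M x b2 / ZB M x b2 < m1" using neg Zp by (simp add: divide_simps)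
  have "- b1 * m1 < - b1 * (AB M x b2 / ZB M x b2)"
    using m b1 by (intro mult_strict_left_mono_neg) auto
  moreover have "(b2 - b1) * (AB M x b2 / ZB M x b2) = b2 * (AB M x b2 / ZB M x b2) - b1 * (AB M x b2 / ZB M x b2)"
    by (rule left_diff_distrib)
  ultimately show ?thesis unfolding FB_eq m1_def using A(1) by linarith
qed

end

context gm begin

lemma cont_int:
  fixes H :: "('c::metric_space \<times> 'a) \<Rightarrow> real"
  assumes "compact \<Theta>" "continuous_on (\<Theta> \<times> K) H" "\<And>t. t \<in> \<Theta> \<Longrightarrow> continuous_on UNIV (\<lambda>z. H (t,z))"
  shows "continuous_on \<Theta> (\<lambda>t. \<integral>z. H (t,z) \<partial>M)"
  unfolding continuous_on_iff
proof (intro ballI allI impI)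
  fix t e assume t: "t \<in> \<Theta>" and e: "(0::real) < e"
  obtain d where d: "d > 0" "\<And>t t' z. t \<in> \<Theta> \<Longrightarrow> t' \<in> \<Theta> \<Longrightarrow> dist t t' < d \<Longrightarrow> z \<in> K \<Longrightarrow> \<bar>H (t,z) - H (t',z)\<bar> < e/2"
    using unif_approx[OF assms(1) cK assms(2), of "e/2"] e by auto
  show "\<exists>d>0. \<forall>t'\<in>\<Theta>. dist t' t < d \<longrightarrow> dist (\<integral>z. H (t',z) \<partial>M) (\<integral>z. H (t,z) \<partial>M) < e"
  proof (intro exI[of _ d] conjI ballI impI d(1))
    fix t' assume t': "t' \<in> \<Theta>" "dist t' t < d"
    have i1: "integrable M (\<lambda>z. H (t',z))" using t' assms(3) by (intro integrable_cont) auto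
    have i2: "integrable M (\<lambda>z. H (t,z))" using t assms(3) by (intro integrable_cont) auto
    have i: "integrable M (\<lambda>z. H (t',z) - H (t,z))" using i1 i2 by (rule Bochner_Integration.integrable_diff)
    have ae: "AE z in M. \<bar>H (t',z) - H (t,z)\<bar> \<le> e/2"
      using aeK by eventually_elim (use d(2)[OF t' (1) t] t'(2) in \<open>auto simp: dist_commute less_imp_le\<close>)
    have "(\<integral>z. H (t',z) - H (t,z) \<partial>M) \<le> e/2"
      by (rule integral_le_const[OF i]) (use ae in \<open>eventually_elim, arith\<close>)
    moreover have "(\<integral>z. H (t',z) - H (t,z) \<partial>M) \<ge> - (e/2)"
      by (rule integral_ge_const[OF i]) (use ae in \<open>eventually_elim, arith\<close>)
    moreover have "(\<integral>z. H (t',z) - H (t,z) \<partial>M) = (\<integral>z. H (t',z) \<partial>M) - (\<integral>z. H (t,z) \<partial>M)"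
      using i1 i2 by (rule Bochner_Integration.integral_diff)
    ultimately show "dist (\<integral>z. H (t',z) \<partial>M) (\<integral>z. H (t,z) \<partial>M) < e"
      using e by (simp add: dist_real_def abs_le_iff)
  qed
qed

lemma FB_int:
  "FB M x b = (\<integral>z. (exp (- b * (norm (x - z))\<^sup>2) / ZB M x b) * ln (exp (- b * (norm (x - z))\<^sup>2) / ZB M x b) \<partial>M)"
proof -
  define Z where "Z = ZB M x b"
  have Z: "Z > 0" unfolding Z_def by (rule ZB_pos)
  have pw: "(exp (- b * (norm (x - z))\<^sup>2) / Z) * ln (exp (- b * (norm (x - z))\<^sup>2) / Z)
      = (- b / Z) * ((norm (x - z))\<^sup>2 * exp (- b * (norm (x - z))\<^sup>2)) + (- ln Z / Z) * exp (- b * (norm (x - z))\<^sup>2)" for z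
    using Z by (simp add: ln_div field_simps)
  have "(\<integral>z. (exp (- b * (norm (x - z))\<^sup>2) / Z) * ln (exp (- b * (norm (x - z))\<^sup>2) / Z) \<partial>M)
      = (- b / Z) * AB M x b + (- ln Z / Z) * Z"
  proof -
    have i1: "integrable M (\<lambda>z. (- b / Z) * ((norm (x - z))\<^sup>2 * exp (- b * (norm (x - z))\<^sup>2)))"
      by (intro integrable_cont continuous_intros)
    have i2: "integrable M (\<lambda>z. (- ln Z / Z) * exp (- b * (norm (x - z))\<^sup>2))"
      by (intro integrable_cont continuous_intros)
    show ?thesis unfolding pw Bochner_Integration.integral_add[OF i1 i2] by (simp add: AB_def Z_def ZB_def)
  qed
  also have "\<dots> = FB M x b" using Z by (simp add: FB_def Z_def)
  finally show ?thesis by (simp add: Z_def)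
qed

lemma F_FB:
  assumes "\<sigma> \<noteq> 0"
  shows "F_fun \<rho> M x \<sigma> = FB M x (1 / (2 * \<sigma>\<^sup>2)) + ln \<rho>"
proof -
  have e: "exp (- (norm (x - z))\<^sup>2 / (2 * \<sigma>\<^sup>2)) = exp (- (1 / (2 * \<sigma>\<^sup>2)) * (norm (x - z))\<^sup>2)" for z
    by simp
  have w: "gauss_w M x \<sigma> z = exp (- (1 / (2 * \<sigma>\<^sup>2)) * (norm (x - z))\<^sup>2) / ZB M x (1 / (2 * \<sigma>\<^sup>2))" for z
    unfolding gauss_w_def ZB_def e ..
  show ?thesis unfolding F_fun_def w FB_int[of x "1 / (2 * \<sigma>\<^sup>2)"] ..
qed


lemma space_UNIV: "space M = UNIV"
  using sets.sets_into_space[OF sb[of UNIV]] by auto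

lemma beta_mono:
  fixes s1 s2 :: real
  assumes "0 < s1" "s1 \<le> s2"
  shows "1 / (2 * s2\<^sup>2) \<le> 1 / (2 * s1\<^sup>2)" "0 \<le> 1 / (2 * s2\<^sup>2)"
proof -
  have "s1\<^sup>2 \<le> s2\<^sup>2" using assms by (intro power_mono) auto
  then show "1 / (2 * s2\<^sup>2) \<le> 1 / (2 * s1\<^sup>2)" using assms
    by (intro divide_left_mono) auto
qed simp

lemma beta_strict:
  fixes s1 s2 :: real
  assumes "0 < s1" "s1 < s2"
  shows "1 / (2 * s2\<^sup>2) < 1 / (2 * s1\<^sup>2)" "0 < 1 / (2 * s2\<^sup>2)"
proof -
  have "s1\<^sup>2 < s2\<^sup>2" using assms by (intro power_strict_mono) auto
  then show "1 / (2 * s2\<^sup>2) < 1 / (2 * s1\<^sup>2)" using assms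
    by (intro divide_strict_left_mono) auto
  show "0 < 1 / (2 * s2\<^sup>2)" using assms by simp
qed

lemma F_mono_sigma:
  assumes "0 < s1" "s1 \<le> s2"
  shows "F_fun \<rho> M x s2 \<le> F_fun \<rho> M x s1"
  using FB_mono[OF beta_mono(2)[OF assms] beta_mono(1)[OF assms], of x] assms
  by (simp add: F_FB)

lemma F_strict_sigma:
  assumes "0 < s1" "s1 < s2" "F_fun \<rho> M x s2 \<noteq> ln \<rho>"
  shows "F_fun \<rho> M x s2 < F_fun \<rho> M x s1"
proof -
  have "FB M x (1 / (2 * s2\<^sup>2)) \<noteq> 0" using assms by (simp add: F_FB)
  from FB_strict[OF beta_strict(2)[OF assms(1,2)] beta_strict(1)[OF assms(1,2)] this] assms
  show ?thesis by (simp add: F_FB)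
qed

lemma root_props:
  assumes r: "0 < \<rho>" "\<rho> < 1" and s0: "0 < s0" and F0: "F_fun \<rho> M x s0 = 0"
  shows "sigma_star \<rho> M x = s0"
    and "\<And>s. 0 < s \<Longrightarrow> s < s0 \<Longrightarrow> F_fun \<rho> M x s > 0"
    and "\<And>s. s0 < s \<Longrightarrow> F_fun \<rho> M x s < 0"
proof -
  have lnr: "ln \<rho> < 0" using r by simp
  show pos: "F_fun \<rho> M x s > 0" if "0 < s" "s < s0" for s
    using F_strict_sigma[OF that, of \<rho> x] F0 lnr by simp
  show neg: "F_fun \<rho> M x s < 0" if "s0 < s" for s
  proof -
    have "F_fun \<rho> M x s \<le> F_fun \<rho> M x s0" using F_mono_sigma[of s0 s] s0 that by simp
    moreover have "F_fun \<rho> M x s \<noteq> 0"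
    proof
      assume "F_fun \<rho> M x s = 0"
      then show False using F_strict_sigma[OF s0 that, of \<rho> x] F0 lnr by simp
    qed
    ultimately show ?thesis using F0 by simp
  qed
  show "sigma_star \<rho> M x = s0"
    unfolding sigma_star_def
  proof (rule the_equality)
    show "0 < s0 \<and> F_fun \<rho> M x s0 = 0" using s0 F0 by simp
    fix s assume "0 < s \<and> F_fun \<rho> M x s = 0"
    then show "s = s0" using pos[of s] neg[of s] by (cases s s0 rule: linorder_cases) auto
  qed
qed

lemma F_cont:
  assumes "0 < a" "compact C"
  shows "continuous_on (C \<times> {a..b}) (\<lambda>t. F_fun \<rho> M (fst t) (snd t))"
proof -
  define \<Theta> where "\<Theta> = C \<times> {a..b}"
  have cT: "compact \<Theta>" unfolding \<Theta>_def using assms by (intro compact_Times) auto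
  have nz: "\<And>t. t \<in> \<Theta> \<Longrightarrow> snd t \<noteq> 0" using assms by (auto simp: \<Theta>_def)
  have nz2: "\<And>p. p \<in> \<Theta> \<times> K \<Longrightarrow> snd (fst p) \<noteq> 0" using nz by auto
  define ZT where "ZT t = (\<integral>z. exp (- (1 / (2 * (snd t)\<^sup>2)) * (norm (fst t - z))\<^sup>2) \<partial>M)" for t :: "'a \<times> real"
  define AT where "AT t = (\<integral>z. (norm (fst t - z))\<^sup>2 * exp (- (1 / (2 * (snd t)\<^sup>2)) * (norm (fst t - z))\<^sup>2) \<partial>M)" for t :: "'a \<times> real"
  have cZ0: "continuous_on \<Theta> (\<lambda>t. \<integral>z. (\<lambda>p. exp (- (1 / (2 * (snd (fst p))\<^sup>2)) * (norm (fst (fst p) - snd p))\<^sup>2)) (t,z) \<partial>M)"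
    by (rule cont_int[OF cT]) (use nz nz2 in \<open>auto intro!: continuous_intros\<close>)
  have cZ: "continuous_on \<Theta> ZT" using cZ0 by (simp add: ZT_def)
  have cA0: "continuous_on \<Theta> (\<lambda>t. \<integral>z. (\<lambda>p. (norm (fst (fst p) - snd p))\<^sup>2 * exp (- (1 / (2 * (snd (fst p))\<^sup>2)) * (norm (fst (fst p) - snd p))\<^sup>2)) (t,z) \<partial>M)"
    by (rule cont_int[OF cT]) (use nz nz2 in \<open>auto intro!: continuous_intros\<close>)
  have cA: "continuous_on \<Theta> AT" using cA0 by (simp add: AT_def)
  have eq: "F_fun \<rho> M (fst t) (snd t) = - (1 / (2 * (snd t)\<^sup>2)) * AT t / ZT t - ln (ZT t) + ln \<rho>"
    if "t \<in> \<Theta>" for t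
    using nz[OF that] by (simp add: F_FB FB_def AB_def ZB_def AT_def ZT_def)
  have Zp: "ZT t > 0" for t
  proof -
    have "0 < ZB M (fst t) (1 / (2 * (snd t)\<^sup>2))" by (rule ZB_pos)
    then show ?thesis unfolding ZB_def ZT_def by simp
  qed
  have "continuous_on \<Theta> (\<lambda>t. - (1 / (2 * (snd t)\<^sup>2)) * AT t / ZT t - ln (ZT t) + ln \<rho>)"
    using cZ cA Zp nz by (auto intro!: continuous_intros simp: less_imp_neq[symmetric])
  then show ?thesis unfolding \<Theta>_def[symmetric] using eq by (simp cong: continuous_on_cong)
qed

lemma F_cont1:
  assumes "0 < a"
  shows "continuous_on {a..b} (\<lambda>s. F_fun \<rho> M x s)"
proof -
  have "continuous_on {a..b} (\<lambda>s. (\<lambda>t. F_fun \<rho> M (fst t) (snd t)) (x, s))"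
    by (rule continuous_on_compose2[OF F_cont[OF assms, where C="{x}" and b=b and \<rho>=\<rho>]]) (auto intro!: continuous_intros)
  then show ?thesis by simp
qed

lemma bracket:
  assumes r: "0 < \<rho>" "\<rho> < 1" and s: "0 < s1" "s1 < s2"
    and F1: "F_fun \<rho> M x s1 > 0" and F2: "F_fun \<rho> M x s2 < 0"
  shows "s1 < sigma_star \<rho> M x" "sigma_star \<rho> M x < s2" "F_fun \<rho> M x (sigma_star \<rho> M x) = 0"
proof -
  obtain s0 where s0: "s1 \<le> s0" "s0 \<le> s2" "F_fun \<rho> M x s0 = 0"
    using IVT2'[of "\<lambda>s. F_fun \<rho> M x s" s2 0 s1] F1 F2 s F_cont1[OF s(1), where b=s2 and \<rho>=\<rho> and x=x] by auto
  have "s0 \<noteq> s1" "s0 \<noteq> s2" using s0 F1 F2 by auto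
  with s0 have "s1 < s0" "s0 < s2" by auto
  moreover have "sigma_star \<rho> M x = s0" using root_props(1)[OF r _ s0(3)] s \<open>s1 < s0\<close> by simp
  ultimately show "s1 < sigma_star \<rho> M x" "sigma_star \<rho> M x < s2" "F_fun \<rho> M x (sigma_star \<rho> M x) = 0"
    using s0 by auto
qed

end

context gm begin
lemma b_to_sigma:
  assumes "b > 0"
  shows "sqrt (1 / (2 * b)) > 0" "1 / (2 * (sqrt (1 / (2 * b)))\<^sup>2) = b"
  using assms by auto

lemma F_large:
  assumes r: "0 < \<rho>" "\<rho> < 1" and R: "\<forall>z\<in>K. norm (x - z) \<le> R"
  shows "\<exists>\<sigma>>0. F_fun \<rho> M x \<sigma> < 0"
proof -
  define b where "b = - ln \<rho> / (2 * (R\<^sup>2 + 1))"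
  have lnr: "ln \<rho> < 0" using r by simp
  have R2: "0 \<le> R\<^sup>2" by simp
  have "0 < 2 * (R\<^sup>2 + 1)" by (intro mult_pos_pos add_nonneg_pos) auto
  then have b: "b > 0" unfolding b_def using lnr by (intro divide_pos_pos) auto
  have bR: "b * R\<^sup>2 < - ln \<rho>"
  proof -
    have "b * R\<^sup>2 = - ln \<rho> * (R\<^sup>2 / (2 * (R\<^sup>2 + 1)))" by (simp add: b_def)
    also have "R\<^sup>2 / (2 * (R\<^sup>2 + 1)) < 1"
    proof -
      have "y / (2 * (y + 1)) < 1" if "0 \<le> y" for y :: real using that by (simp add: divide_simps)
      from this[of "R\<^sup>2"] show ?thesis by simp
    qed
    then have "- ln \<rho> * (R\<^sup>2 / (2 * (R\<^sup>2 + 1))) < - ln \<rho> * 1"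
      using lnr by (intro mult_strict_left_mono) auto
    finally show ?thesis by simp
  qed
  have Zge: "exp (- b * R\<^sup>2) \<le> ZB M x b"
    unfolding ZB_def
  proof (rule integral_ge_const)
    show "integrable M (\<lambda>z. exp (- b * (norm (x - z))\<^sup>2))" by (rule int_e)
    show "AE z in M. exp (- b * R\<^sup>2) \<le> exp (- b * (norm (x - z))\<^sup>2)"
      using aeK
    proof eventually_elim
      case (elim z)
      then have "norm (x - z) \<le> R" using R by auto
      then have "(norm (x - z))\<^sup>2 \<le> R\<^sup>2" by (intro power_mono) auto
      then show ?case using b by (simp add: mult_left_mono)
    qed
  qed
  have "ln (exp (- b * R\<^sup>2)) \<le> ln (ZB M x b)"
    using Zge ZB_pos[of x b] by (subst ln_le_cancel_iff) auto
  then have lnZ: "- b * R\<^sup>2 \<le> ln (ZB M x b)" by simp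
  have "0 \<le> b * (AB M x b / ZB M x b)"
    using b AB_nonneg[of x b] ZB_pos[of x b] by simp
  then have "FB M x b \<le> - ln (ZB M x b)" unfolding FB_eq by simp
  then have "FB M x b + ln \<rho> < 0" using lnZ bR by linarith
  then show ?thesis using b_to_sigma[OF b] by (intro exI[of _ "sqrt (1 / (2 * b))"]) (simp add: F_FB)
qed

lemma tangent_ln:
  fixes t c :: real
  assumes "t > 0" "c > 0"
  shows "t * ln t \<ge> ln c * t + t - c"
proof -
  have "ln (c / t) \<le> c / t - 1" using assms by (intro ln_le_minus_one) auto
  then have "ln c - ln t \<le> c / t - 1" using assms by (simp add: ln_div)
  then have "t * (ln c - ln t) \<le> t * (c / t - 1)" using assms by (intro mult_left_mono) auto
  then show ?thesis using assms by (simp add: algebra_simps)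
qed


lemma int_ind_mult:
  fixes f :: "'a \<Rightarrow> real"
  assumes "A \<in> sets borel" "continuous_on UNIV f"
  shows "integrable M (\<lambda>z. indicator A z * f z)"
  using integrable_mult_indicator[OF sb[OF assms(1)] integrable_cont[OF assms(2)]] by simp

lemma int_ind:
  assumes "A \<in> sets borel"
  shows "integrable M (indicator A :: 'a \<Rightarrow> real)"
  using int_ind_mult[OF assms, of "\<lambda>_. 1"] by simp

lemma F_small:
  assumes r: "0 < \<rho>" "\<rho> < 1" and rpos: "r > 0"
    and pp: "measure M (ball x (r/2)) > 0" and mm: "measure M (cball x r) \<le> \<rho>\<^sup>2 / (2 * exp 2)"
  shows "\<exists>\<sigma>>0. F_fun \<rho> M x \<sigma> > 0"
proof -
  define p where "p = measure M (ball x (r/2))"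
  define m where "m = measure M (cball x r)"
  have p0: "p > 0" using pp by (simp add: p_def)
  have p1: "p \<le> 1" unfolding p_def by (rule prob_le_1)
  have m0: "m \<ge> 0" by (simp add: m_def)
  define b where "b = 4 * ln (2 / p) / (3 * r\<^sup>2)"
  have l2p: "ln (2 / p) > 0" using p0 p1 by simp
  have b: "b > 0" unfolding b_def using l2p rpos by simp
  have eb: "exp (- (3/4) * b * r\<^sup>2) = p / 2"
  proof -
    have "- (3/4) * b * r\<^sup>2 = - ln (2 / p)" using rpos by (simp add: b_def field_simps)
    then show ?thesis using p0 by (simp add: exp_minus ln_div exp_diff)
  qed
  define D where "D z = (norm (x - z))\<^sup>2" for z
  define Z where "Z = ZB M x b"
  have Z0: "Z > 0" unfolding Z_def by (rule ZB_pos)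
  define w where "w z = exp (- b * D z) / Z" for z
  have w0: "w z > 0" for z using Z0 by (simp add: w_def)
  have cw: "continuous_on UNIV w" unfolding w_def D_def using Z0 by (intro continuous_intros) auto
  have iw: "integrable M w" by (rule integrable_cont[OF cw])
  define ind where "ind = (indicator (cball x r) :: 'a \<Rightarrow> real)"
  have ind01: "ind z = 0 \<or> ind z = 1" for z by (simp add: ind_def indicator_def)
  have iind: "integrable M ind" unfolding ind_def by (rule int_ind) simp
  have iindw: "integrable M (\<lambda>z. ind z * w z)" unfolding ind_def by (rule int_ind_mult[OF _ cw]) simp
  have intind: "(\<integral>z. ind z \<partial>M) = m" by (simp add: ind_def m_def space_UNIV)
  have intw: "(\<integral>z. w z \<partial>M) = 1"
    using Z0 by (simp add: w_def Z_def ZB_def D_def)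
  have Zlow: "p * exp (- b * r\<^sup>2 / 4) \<le> Z"
  proof -
    have "(\<integral>z. indicator (ball x (r/2)) z * exp (- b * r\<^sup>2 / 4) \<partial>M) \<le> (\<integral>z. exp (- b * D z) \<partial>M)"
    proof (rule integral_mono)
      show "integrable M (\<lambda>z. indicator (ball x (r/2)) z * exp (- b * r\<^sup>2 / 4))"
        by (rule int_ind_mult) auto
      show "integrable M (\<lambda>z. exp (- b * D z))" unfolding D_def by (rule int_e)
      fix z
      show "indicator (ball x (r/2)) z * exp (- b * r\<^sup>2 / 4) \<le> exp (- b * D z)"
      proof (cases "z \<in> ball x (r/2)")
        case True
        then have "norm (x - z) < r/2" by (simp add: dist_norm)
        then have "(norm (x - z))\<^sup>2 \<le> (r/2)\<^sup>2" by (intro power_mono) auto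
        then have "D z \<le> r\<^sup>2 / 4" by (simp add: D_def power_divide)
        then have "- b * r\<^sup>2 / 4 \<le> - b * D z" using b by (simp add: mult_left_mono)
        then show ?thesis using True by simp
      qed simp
    qed
    then show ?thesis by (simp add: p_def Z_def ZB_def D_def space_UNIV mult.commute)
  qed
  have out: "(\<integral>z. (1 - ind z) * w z \<partial>M) \<le> 1/2"
  proof -
    have "(\<integral>z. (1 - ind z) * w z \<partial>M) \<le> exp (- b * r\<^sup>2) / Z"
    proof (rule integral_le_const)
      show "integrable M (\<lambda>z. (1 - ind z) * w z)"
        using iw iindw by (simp add: left_diff_distrib)
      show "AE z in M. (1 - ind z) * w z \<le> exp (- b * r\<^sup>2) / Z"
      proof (rule AE_I2)
        fix z
        show "(1 - ind z) * w z \<le> exp (- b * r\<^sup>2) / Z"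
        proof (cases "z \<in> cball x r")
          case True
          then show ?thesis using Z0 by (simp add: ind_def)
        next
          case False
          then have "r \<le> norm (x - z)" by (simp add: dist_norm)
          then have "r\<^sup>2 \<le> (norm (x - z))\<^sup>2" using rpos by (intro power_mono) auto
          then have "- b * D z \<le> - b * r\<^sup>2" using b by (simp add: D_def mult_left_mono)
          then have "exp (- b * D z) / Z \<le> exp (- b * r\<^sup>2) / Z" using Z0 by (intro divide_right_mono) auto
          then show ?thesis using False by (simp add: ind_def w_def)
        qed
      qed
    qed
    also have "exp (- b * r\<^sup>2) / Z \<le> exp (- b * r\<^sup>2) / (p * exp (- b * r\<^sup>2 / 4))"
      using Zlow p0 Z0 by (intro divide_left_mono) auto
    also have "\<dots> = exp (- (3/4) * b * r\<^sup>2) / p"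
    proof -
      have "exp (- b * r\<^sup>2) = exp (- (3/4) * b * r\<^sup>2) * exp (- b * r\<^sup>2 / 4)"
        by (simp add: exp_add[symmetric] field_simps)
      then show ?thesis by simp
    qed
    also have "\<dots> = 1/2" using eb p0 by simp
    finally show ?thesis .
  qed
  define W where "W = (\<integral>z. ind z * w z \<partial>M)"
  have "(\<integral>z. (1 - ind z) * w z \<partial>M) = 1 - W"
  proof -
    have "(\<integral>z. (1 - ind z) * w z \<partial>M) = (\<integral>z. w z - ind z * w z \<partial>M)"
      by (simp add: left_diff_distrib)
    also have "\<dots> = (\<integral>z. w z \<partial>M) - W" unfolding W_def by (rule Bochner_Integration.integral_diff[OF iw iindw])
    finally show ?thesis using intw by simp
  qed
  with out have W2: "W \<ge> 1/2" by simp
  define c where "c = exp 2 / \<rho>\<^sup>2"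
  have c0: "c > 0" using r by (simp add: c_def)
  have lnc: "ln c = 2 - 2 * ln \<rho>" using r by (simp add: c_def ln_div ln_realpow)
  have pw: "ln c * (ind z * w z) - c * ind z + w z - 1 + ind z \<le> w z * ln (w z)" for z
    using ind01[of z]
  proof
    assume "ind z = 0"
    then show ?thesis using tangent_ln[OF w0[of z], of 1] by simp
  next
    assume "ind z = 1"
    then show ?thesis using tangent_ln[OF w0[of z] c0] by simp
  qed
  have iwl: "integrable M (\<lambda>z. w z * ln (w z))"
    by (rule integrable_cont) (use cw w0 in \<open>auto intro!: continuous_intros simp: less_imp_neq[symmetric]\<close>)
  have ilow: "integrable M (\<lambda>z. ln c * (ind z * w z) - c * ind z + w z - 1 + ind z)"
    using iind iindw iw by auto
  have "(\<integral>z. ln c * (ind z * w z) - c * ind z + w z - 1 + ind z \<partial>M) \<le> (\<integral>z. w z * ln (w z) \<partial>M)"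
    by (rule integral_mono[OF ilow iwl pw])
  moreover have "(\<integral>z. ln c * (ind z * w z) - c * ind z + w z - 1 + ind z \<partial>M) = ln c * W - c * m + m"
  proof -
    have i1: "integrable M (\<lambda>z. ln c * (ind z * w z) - c * ind z)" using iind iindw by auto
    have i2: "integrable M (\<lambda>z. ln c * (ind z * w z) - c * ind z + w z)" using iind iindw iw by auto
    have i3: "integrable M (\<lambda>z. ln c * (ind z * w z) - c * ind z + w z - 1)" using iind iindw iw by auto
    have "(\<integral>z. ln c * (ind z * w z) - c * ind z + w z - 1 + ind z \<partial>M)
        = (\<integral>z. ln c * (ind z * w z) - c * ind z + w z - 1 \<partial>M) + (\<integral>z. ind z \<partial>M)"
      by (rule Bochner_Integration.integral_add[OF i3 iind])
    also have "(\<integral>z. ln c * (ind z * w z) - c * ind z + w z - 1 \<partial>M) = (\<integral>z. ln c * (ind z * w z) - c * ind z + w z \<partial>M) - 1"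
      using Bochner_Integration.integral_diff[OF i2, of "\<lambda>_. 1"] by (simp add: prob_space)
    also have "(\<integral>z. ln c * (ind z * w z) - c * ind z + w z \<partial>M) = (\<integral>z. ln c * (ind z * w z) - c * ind z \<partial>M) + (\<integral>z. w z \<partial>M)"
      by (rule Bochner_Integration.integral_add[OF i1 iw])
    also have "(\<integral>z. ln c * (ind z * w z) - c * ind z \<partial>M) = ln c * W - c * m"
      using Bochner_Integration.integral_diff[of M "\<lambda>z. ln c * (ind z * w z)" "\<lambda>z. c * ind z"] iind iindw intind
      by (simp add: W_def)
    finally show ?thesis using intw intind by simp
  qed
  moreover have "(\<integral>z. w z * ln (w z) \<partial>M) = FB M x b"
    by (simp add: FB_int w_def Z_def D_def)
  ultimately have FBlow: "ln c * W - c * m + m \<le> FB M x b" by simp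
  have "ln \<rho> < 0" using r by simp
  then have "ln c * (1/2) \<le> ln c * W" using W2 lnc by (intro mult_left_mono) auto
  moreover have "c * m \<le> 1/2"
  proof -
    have "c * m \<le> c * (\<rho>\<^sup>2 / (2 * exp 2))" using mm c0 by (intro mult_left_mono) (auto simp: m_def)
    also have "\<dots> = 1/2" using r by (simp add: c_def)
    finally show ?thesis .
  qed
  ultimately have "FB M x b + ln \<rho> \<ge> 1/2" using FBlow m0 lnc by linarith
  then have "FB M x b + ln \<rho> > 0" by linarith
  then show ?thesis using b_to_sigma[OF b] by (intro exI[of _ "sqrt (1 / (2 * b))"]) (simp add: F_FB)
qed

end

lemma emp_measure_eq:
  assumes "n > 0"
  shows "emp_measure xs n = measure_pmf (map_pmf xs (pmf_of_set {0..<n}))"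
  using assms unfolding emp_measure_def
  by (simp add: map_pmf_of_set mset_map mset_upt)

lemma emp_integral:
  assumes "n > 0"
  shows "(\<integral>z. h z \<partial>emp_measure xs n) = (\<Sum>j<n. h (xs j)) / n"
  using assms by (simp add: emp_measure_eq integral_map_pmf integral_pmf_of_set atLeast0LessThan lessThan_empty_iff)

lemma emp_gm:
  assumes "n > 0" "compact K" "\<forall>j<n. xs j \<in> K"
  shows "gm (emp_measure xs n) K"
proof -
  have set: "set_pmf (map_pmf xs (pmf_of_set {0..<n})) = xs ` {0..<n}"
    using assms(1) by simp
  show ?thesis
  proof (intro gm.intro gm_axioms.intro)
    show "prob_space (emp_measure xs n)" unfolding emp_measure_def by (rule prob_space_measure_pmf)
  next
    fix h :: "'a \<Rightarrow> real"
    show "h \<in> borel_measurable (emp_measure xs n)" unfolding emp_measure_def by simp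
  next
    fix A :: "'a set"
    show "A \<in> sets (emp_measure xs n)" unfolding emp_measure_def by simp
  next
    show "compact K" by fact
    show "AE z in emp_measure xs n. z \<in> K"
      unfolding emp_measure_eq[OF assms(1)] AE_measure_pmf_iff set using assms(3) by auto
  qed
qed


locale muset =
  fixes mu :: "'a::euclidean_space measure" and f :: "'a \<Rightarrow> real" and \<rho> :: real and K :: "'a set"
  assumes ps: "prob_space mu" and fnn: "\<forall>x. f x \<ge> 0" and fc: "continuous_on UNIV f"
    and mu_def: "mu = density lborel (\<lambda>x. ennreal (f x))"
    and cK: "compact K" and null: "emeasure mu (UNIV - K) = 0"
    and r0: "0 < \<rho>" and r1: "\<rho> < 1"
begin

interpretation P: prob_space mu by (rule ps)

lemma fmeas[measurable]: "f \<in> borel_measurable borel"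
  using fc by (rule borel_measurable_continuous_onI)

lemma sets_mu[simp]: "sets mu = sets borel"
  unfolding mu_def by simp

lemma space_mu[simp]: "space mu = UNIV"
  unfolding mu_def by simp

lemma gm_mu: "gm mu K"
proof (intro gm.intro gm_axioms.intro)
  show "prob_space mu" by (rule ps)
  fix h :: "'a \<Rightarrow> real" assume h: "h \<in> borel_measurable borel"
  show "h \<in> borel_measurable mu" by (subst measurable_cong_sets[OF sets_mu refl]) (rule h)
next
  fix A :: "'a set" assume "A \<in> sets borel" then show "A \<in> sets mu" by simp
next
  show "compact K" by (rule cK)
  have "closed K" using cK by (rule compact_imp_closed)
  then have "UNIV - K \<in> sets borel" by (intro borel_open) (simp add: open_Diff)
  then have "UNIV - K \<in> null_sets mu"
    using null by (auto simp: null_sets_def)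
  then show "AE z in mu. z \<in> K" by (rule AE_I') auto
qed

lemma pos_ball:
  assumes "f y > 0" "d > 0"
  shows "emeasure mu (ball y d) > 0"
proof -
  obtain e where e: "e > 0" "\<And>z. dist z y < e \<Longrightarrow> dist (f z) (f y) < f y / 2"
    using fc assms(1) unfolding continuous_on_iff by (metis UNIV_I half_gt_zero)
  define e' where "e' = min e d"
  have e': "e' > 0" using e assms by (simp add: e'_def)
  have fz: "f z \<ge> f y / 2" if "z \<in> ball y e'" for z
  proof -
    have "dist z y < e" using that by (simp add: e'_def dist_commute)
    then have "dist (f z) (f y) < f y / 2" by (rule e(2))
    then have "\<bar>f z - f y\<bar> < f y / 2" by (simp only: dist_real_def)
    then have "f z - f y < f y / 2 \<and> - (f z - f y) < f y / 2" by (simp only: abs_less_iff)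
    then show ?thesis by linarith
  qed
  have "ennreal (f y / 2) * emeasure lborel (ball y e') = (\<integral>\<^sup>+z\<in>ball y e'. ennreal (f y / 2) \<partial>lborel)"
    by (rule nn_integral_cmult_indicator[symmetric]) simp
  also have "\<dots> \<le> (\<integral>\<^sup>+z\<in>ball y e'. ennreal (f z) \<partial>lborel)"
    by (intro nn_integral_mono) (auto split: split_indicator intro!: ennreal_leI fz)
  also have "\<dots> = emeasure mu (ball y e')"
    unfolding mu_def by (rule emeasure_density[symmetric]) auto
  also have "\<dots> \<le> emeasure mu (ball y d)"
    by (intro emeasure_mono) (auto simp: e'_def)
  finally have le: "ennreal (f y / 2) * emeasure lborel (ball y e') \<le> emeasure mu (ball y d)" .
  have "emeasure lborel (ball y e') = ennreal (unit_ball_vol (real DIM('a)) * e' ^ DIM('a))"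
    using e' by (intro emeasure_ball) auto
  moreover have "unit_ball_vol (real DIM('a)) * e' ^ DIM('a) > 0"
    using e' by (intro mult_pos_pos unit_ball_vol_pos) auto
  ultimately have "ennreal (f y / 2) * emeasure lborel (ball y e') > 0"
    using assms(1) by (simp add: ennreal_mult''[symmetric] del: ennreal_mult'')
  with le show ?thesis by order
qed

lemma S_sub_K:
  assumes "f y > 0" shows "y \<in> K"
proof (rule ccontr)
  assume "y \<notin> K"
  have "open (UNIV - K)" using cK by (simp add: compact_imp_closed open_Diff)
  then obtain d where d: "d > 0" "ball y d \<subseteq> UNIV - K"
    using \<open>y \<notin> K\<close> open_contains_ball by blast
  have "emeasure mu (ball y d) \<le> emeasure mu (UNIV - K)"
    using d by (intro emeasure_mono) (auto simp: cK compact_imp_closed)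
  then show False using pos_ball[OF assms d(1)] null by simp
qed

definition K0 where "K0 = closure {y. f y > 0}"

lemma K0_sub: "K0 \<subseteq> K"
  unfolding K0_def using S_sub_K cK by (intro closure_minimal) (auto intro: compact_imp_closed)

lemma K0_compact: "compact K0"
  unfolding compact_eq_bounded_closed
  using K0_sub cK compact_imp_bounded bounded_subset by (auto simp: K0_def)

lemma K0_ball:
  assumes "x \<in> K0" "r > 0"
  shows "measure mu (ball x r) > 0"
proof -
  obtain y where y: "f y > 0" "dist y x < r/2"
    using assms unfolding K0_def closure_approachable by (metis half_gt_zero mem_Collect_eq)
  have "emeasure mu (ball y (r/2)) \<le> emeasure mu (ball x r)"
  proof (intro emeasure_mono)
    show "ball y (r/2) \<subseteq> ball x r"
    proof
      fix z assume "z \<in> ball y (r/2)"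
      then have "dist y z < r/2" by simp
      moreover have "dist x z \<le> dist x y + dist y z" by (rule dist_triangle)
      ultimately show "z \<in> ball x r" using y(2) by (simp add: dist_commute)
    qed
  qed simp
  with pos_ball[OF y(1), of "r/2"] assms have "emeasure mu (ball x r) > 0" by simp
  then show ?thesis by (simp add: P.emeasure_eq_measure)
qed

lemma singleton_null: "measure mu {x} = 0"
proof -
  have "AE z\<in>{x} in lborel. ennreal (f z) = 0"
    using AE_lborel_singleton[of x] by eventually_elim auto
  then have "{x} \<in> null_sets mu"
    unfolding mu_def by (subst null_sets_density_iff) auto
  then show ?thesis by (simp add: measure_def null_setsD1)
qed

lemma small_cball:
  assumes "\<epsilon> > 0"
  shows "\<exists>r>0. measure mu (cball x r) \<le> \<epsilon>"
proof -
  define A where "A n = cball x (1 / Suc n)" for n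
  have "antimono_on UNIV A"
    unfolding A_def by (intro decseq_SucI subset_cball) (auto simp: frac_le)
  moreover have "range A \<subseteq> sets mu" by (auto simp: A_def)
  ultimately have lim: "(\<lambda>n. measure mu (A n)) \<longlonglongrightarrow> measure mu (\<Inter>(range A))"
    by (rule P.finite_Lim_measure_decseq[rotated])
  have "\<Inter>(range A) = {x}"
  proof (intro equalityI subsetI)
    fix z assume z: "z \<in> \<Inter>(range A)"
    show "z \<in> {x}"
    proof (rule ccontr)
      assume "z \<notin> {x}"
      then have "dist x z > 0" by simp
      then obtain n where "1 / Suc n < dist x z" using nat_approx_posE by blast
      moreover have "dist x z \<le> 1 / Suc n" using z by (auto simp: A_def)
      ultimately show False by simp
    qed
  qed (auto simp: A_def)
  with lim singleton_null have "(\<lambda>n. measure mu (A n)) \<longlonglongrightarrow> 0" by simp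
  then have "eventually (\<lambda>n. measure mu (A n) < \<epsilon>) sequentially"
    using assms by (intro order_tendstoD) auto
  then obtain n where "measure mu (A n) < \<epsilon>" by (auto simp: eventually_sequentially)
  then show ?thesis by (intro exI[of _ "1 / Suc n"]) (auto simp: A_def)
qed

lemma sigma_mu:
  assumes x: "x \<in> K0"
  shows "0 < sigma_star \<rho> mu x" "F_fun \<rho> mu x (sigma_star \<rho> mu x) = 0"
proof -
  interpret G: gm mu K by (rule gm_mu)
  obtain B where B: "\<And>z. z \<in> K \<Longrightarrow> norm z \<le> B"
    using compact_imp_bounded[OF cK] unfolding bounded_iff by auto
  have xK: "x \<in> K" using x K0_sub by auto
  have R: "\<forall>z\<in>K. norm (x - z) \<le> 2 * B"
  proof
    fix z assume "z \<in> K"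
    then have "norm (x - z) \<le> norm x + norm z" by (simp add: norm_triangle_ineq4)
    then show "norm (x - z) \<le> 2 * B" using B[OF \<open>z \<in> K\<close>] B[OF xK] by simp
  qed
  obtain sb where sb: "sb > 0" "F_fun \<rho> mu x sb < 0"
    using G.F_large[OF r0 r1 R] by auto
  have eps: "\<rho>\<^sup>2 / (2 * exp 2) > 0" using r0 by simp
  obtain r where r: "r > 0" "measure mu (cball x r) \<le> \<rho>\<^sup>2 / (2 * exp 2)"
    using small_cball[OF eps] by auto
  have p: "measure mu (ball x (r/2)) > 0" using K0_ball[OF x] r by simp
  obtain sa where sa: "sa > 0" "F_fun \<rho> mu x sa > 0"
    using G.F_small[OF r0 r1 r(1) p r(2)] by auto
  have "sa < sb"
  proof (rule ccontr)
    assume "\<not> sa < sb"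
    then have "F_fun \<rho> mu x sa \<le> F_fun \<rho> mu x sb" using G.F_mono_sigma[OF sb(1)] by simp
    then show False using sa sb by simp
  qed
  from G.bracket[OF r0 r1 sa(1) this sa(2) sb(2)]
  show "0 < sigma_star \<rho> mu x" "F_fun \<rho> mu x (sigma_star \<rho> mu x) = 0" using sa by auto
qed

end

lemma slln_eps:
  fixes P :: "'b measure" and X :: "nat \<Rightarrow> 'b \<Rightarrow> 'a::euclidean_space" and h :: "'a \<Rightarrow> real"
  assumes ps: "prob_space P" and Xm: "\<forall>i. X i \<in> borel_measurable P"
    and ind: "prob_space.indep_vars P (\<lambda>_. borel) X UNIV"
    and dX: "\<forall>i. distr P borel (X i) = mu"
    and hm: "h \<in> borel_measurable borel" and hb: "\<forall>z. h z \<in> {lo..hi}" and e: "\<epsilon> > 0"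
  shows "AE \<omega> in P. eventually (\<lambda>n. \<bar>(\<Sum>j<n. h (X j \<omega>)) / n - (\<integral>z. h z \<partial>mu)\<bar> < \<epsilon>) sequentially"
proof -
  interpret prob_space P by (rule ps)
  note hm[measurable]
  define Y where "Y j \<omega> = h (X j \<omega>)" for j \<omega>
  have Xm'[measurable]: "X i \<in> borel_measurable P" for i using Xm by auto
  have Ym[measurable]: "Y i \<in> borel_measurable P" for i unfolding Y_def by (rule measurable_compose[OF Xm' hm])
  define E where "E = expectation (Y 0)"
  have E: "E = (\<integral>z. h z \<partial>mu)"
    unfolding E_def Y_def using integral_distr[OF Xm'[of 0] hm] dX by simp
  have dY: "distr P borel (Y i) = distr P borel (Y 0)" for i
  proof -
    have "distr P borel (Y i) = distr (distr P borel (X i)) borel h"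
      unfolding Y_def by (subst distr_distr) (auto simp: comp_def)
    also have "\<dots> = distr (distr P borel (X 0)) borel h" using dX by simp
    also have "\<dots> = distr P borel (Y 0)"
      unfolding Y_def by (subst distr_distr) (auto simp: comp_def)
    finally show ?thesis .
  qed
  have indY: "indep_vars (\<lambda>_. borel) Y UNIV"
    unfolding Y_def by (rule indep_vars_compose2[OF ind]) auto
  define c where "c = (hi + 1 - lo)\<^sup>2"
  have hl: "lo \<le> hi" using hb by (metis atLeastAtMost_iff order_trans)
  have c: "c > 0" using hl by (simp add: c_def)
  define A where "A n = {\<omega>\<in>space P. \<bar>(\<Sum>i\<in>{..<Suc n}. Y i \<omega>) / real (Suc n) - E\<bar> \<ge> \<epsilon>}" for n
  have bnd: "prob (A n) \<le> 2 * exp (-2 * real (Suc n) * \<epsilon>\<^sup>2 / c)" for n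
  proof -
    interpret H: Hoeffding_ineq_iid P "{..<Suc n}" Y "Y 0" lo "hi + 1" E
    proof (unfold_locales)
      show "finite {..<Suc n}" by simp
      show "indep_vars (\<lambda>_. borel) Y {..<Suc n}" using indY by (rule indep_vars_subset) auto
      show "distr P borel (Y i) = distr P borel (Y 0)" for i by (rule dY)
      show "random_variable borel (Y 0)" by simp
      show "AE x in P. Y 0 x \<in> {lo..hi + 1}"
      proof (rule AE_I2)
        fix x have "lo \<le> h (X 0 x) \<and> h (X 0 x) \<le> hi" using hb by auto
        then show "Y 0 x \<in> {lo..hi + 1}" by (simp add: Y_def)
      qed
      show "E \<equiv> expectation (Y 0)" by (simp add: E_def)
    qed
    have "lo < hi + 1" using hl by simp
    moreover have "{..<Suc n} \<noteq> {}" by auto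
    ultimately have "prob {\<omega>\<in>space P. \<bar>(\<Sum>i\<in>{..<Suc n}. Y i \<omega>) / real (card {..<Suc n}) - E\<bar> \<ge> \<epsilon>} \<le>
               2 * exp (-2 * real (card {..<Suc n}) * \<epsilon>\<^sup>2 / (hi + 1 - lo)\<^sup>2)"
      by (rule H.Hoeffding_ineq_abs_ge'[OF less_imp_le[OF e]])
    then show ?thesis by (simp add: A_def c_def)
  qed
  define q where "q = exp (-2 * \<epsilon>\<^sup>2 / c)"
  have q: "0 < q" "q < 1" using c e by (auto simp: q_def)
  have eq: "2 * exp (-2 * real (Suc n) * \<epsilon>\<^sup>2 / c) = 2 * q * q ^ n" for n
  proof -
    have "-2 * real (Suc n) * \<epsilon>\<^sup>2 / c = real (Suc n) * (-2 * \<epsilon>\<^sup>2 / c)" using c by (simp add: field_simps)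
    then have "exp (-2 * real (Suc n) * \<epsilon>\<^sup>2 / c) = q ^ Suc n"
      unfolding q_def by (simp only: exp_of_nat_mult)
    then show ?thesis by simp
  qed
  have sg: "summable (\<lambda>n. 2 * q * q ^ n)"
    using q by (intro summable_mult summable_geometric) auto
  have sA: "summable (\<lambda>n. measure P (A n))"
  proof (rule summable_comparison_test[OF _ sg])
    show "\<exists>N. \<forall>n\<ge>N. norm (measure P (A n)) \<le> 2 * q * q ^ n"
      using bnd eq by (auto simp: mult.assoc)
  qed
  have Am[measurable]: "A n \<in> sets P" for n unfolding A_def by measurable
  have "AE \<omega> in P. eventually (\<lambda>n. \<omega> \<in> space P - A n) sequentially"
    by (rule borel_cantelli_AE1[OF Am _ sA]) (simp add: emeasure_eq_measure)
  then show ?thesis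
  proof (rule AE_mp[OF _ AE_I2], intro impI)
    fix \<omega> assume \<omega>: "\<omega> \<in> space P" and ev: "eventually (\<lambda>n. \<omega> \<in> space P - A n) sequentially"
    have "eventually (\<lambda>n. \<bar>(\<Sum>j<Suc n. h (X j \<omega>)) / real (Suc n) - (\<integral>z. h z \<partial>mu)\<bar> < \<epsilon>) sequentially"
      using ev by eventually_elim (use \<omega> in \<open>auto simp: A_def Y_def E not_le\<close>)
    then show "eventually (\<lambda>n. \<bar>(\<Sum>j<n. h (X j \<omega>)) / n - (\<integral>z. h z \<partial>mu)\<bar> < \<epsilon>) sequentially"
      by (subst eventually_sequentially_Suc[symmetric]) simp
  qed
qed

lemma (in gm) int_close:
  fixes g1 g2 :: "'a \<Rightarrow> real"
  assumes "continuous_on UNIV g1" "continuous_on UNIV g2" "\<forall>z\<in>K. \<bar>g1 z - g2 z\<bar> \<le> \<eta>"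
  shows "\<bar>(\<integral>z. g1 z \<partial>M) - (\<integral>z. g2 z \<partial>M)\<bar> \<le> \<eta>"
proof -
  have i1: "integrable M g1" by (rule integrable_cont[OF assms(1)])
  have i2: "integrable M g2" by (rule integrable_cont[OF assms(2)])
  have i: "integrable M (\<lambda>z. g1 z - g2 z)" using i1 i2 by (rule Bochner_Integration.integrable_diff)
  have ae: "AE z in M. \<bar>g1 z - g2 z\<bar> \<le> \<eta>" using aeK by eventually_elim (use assms(3) in auto)
  have "(\<integral>z. g1 z - g2 z \<partial>M) \<le> \<eta>"
    by (rule integral_le_const[OF i]) (use ae in \<open>eventually_elim, arith\<close>)
  moreover have "(\<integral>z. g1 z - g2 z \<partial>M) \<ge> - \<eta>"
    by (rule integral_ge_const[OF i]) (use ae in \<open>eventually_elim, arith\<close>)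
  moreover have "(\<integral>z. g1 z - g2 z \<partial>M) = (\<integral>z. g1 z \<partial>M) - (\<integral>z. g2 z \<partial>M)"
    using i1 i2 by (rule Bochner_Integration.integral_diff)
  ultimately show ?thesis by linarith
qed

lemma avg_close:
  fixes a b :: "nat \<Rightarrow> real"
  assumes "n > 0" "\<forall>j<n. \<bar>a j - b j\<bar> \<le> \<eta>"
  shows "\<bar>(\<Sum>j<n. a j) / n - (\<Sum>j<n. b j) / n\<bar> \<le> \<eta>"
proof -
  have "\<bar>(\<Sum>j<n. a j) - (\<Sum>j<n. b j)\<bar> = \<bar>\<Sum>j<n. a j - b j\<bar>" by (simp add: sum_subtractf)
  also have "\<dots> \<le> (\<Sum>j<n. \<bar>a j - b j\<bar>)" by (rule sum_abs)
  also have "\<dots> \<le> (\<Sum>j<n. \<eta>)" using assms(2) by (intro sum_mono) auto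
  also have "\<dots> = n * \<eta>" by simp
  finally have "\<bar>(\<Sum>j<n. a j) - (\<Sum>j<n. b j)\<bar> / n \<le> \<eta>" using assms(1) by (simp add: divide_simps mult.commute)
  then show ?thesis by (simp add: diff_divide_distrib[symmetric])
qed

lemma ulln:
  fixes P :: "'b measure" and X :: "nat \<Rightarrow> 'b \<Rightarrow> 'a::euclidean_space"
    and H :: "'c::metric_space \<times> 'a \<Rightarrow> real"
  assumes ps: "prob_space P" and Xm: "\<forall>i. X i \<in> borel_measurable P"
    and ind: "prob_space.indep_vars P (\<lambda>_. borel) X UNIV"
    and dX: "\<forall>i. distr P borel (X i) = mu"
    and gmu: "gm mu K"
    and cT: "compact \<Theta>" and cH: "continuous_on (\<Theta> \<times> K) H"
    and cHt: "\<And>t. t \<in> \<Theta> \<Longrightarrow> continuous_on UNIV (\<lambda>z. H (t,z))"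
    and XK: "AE \<omega> in P. \<forall>j. X j \<omega> \<in> K"
  shows "AE \<omega> in P. \<forall>e>0. eventually (\<lambda>n. \<forall>t\<in>\<Theta>. \<bar>(\<Sum>j<n. H (t, X j \<omega>)) / n - (\<integral>z. H (t,z) \<partial>mu)\<bar> < e) sequentially"
proof -
  interpret G: gm mu K by (rule gmu)
  have cK: "compact K" by (rule G.cK)
  have "bounded (H ` (\<Theta> \<times> K))"
    using cT cK cH by (intro compact_imp_bounded compact_continuous_image compact_Times) auto
  then obtain C where C0: "C > 0" and C1: "\<forall>y\<in>H ` (\<Theta> \<times> K). norm y \<le> C"
    unfolding bounded_pos by blast
  have C: "\<And>t z. t \<in> \<Theta> \<Longrightarrow> z \<in> K \<Longrightarrow> \<bar>H (t,z)\<bar> \<le> C" using C1 by fastforce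
  define tr where "tr t z = max (- C) (min C (H (t,z)))" for t z
  have tr_eq: "t \<in> \<Theta> \<Longrightarrow> z \<in> K \<Longrightarrow> tr t z = H (t,z)" for t z
    using C[of t z] by (auto simp: tr_def)
  have tr_b: "\<forall>z. tr t z \<in> {- C..C}" for t using C0 by (auto simp: tr_def)
  have tr_c: "t \<in> \<Theta> \<Longrightarrow> continuous_on UNIV (tr t)" for t
    unfolding tr_def using cHt by (intro continuous_intros) auto
  have tr_m: "t \<in> \<Theta> \<Longrightarrow> tr t \<in> borel_measurable borel" for t
    using tr_c by (rule borel_measurable_continuous_onI)
  define \<eta> where "\<eta> k = 1 / real (Suc k)" for k
  have \<eta>: "\<eta> k > 0" for k by (simp add: \<eta>_def)
  have ex: "\<exists>d T. d > 0 \<and> finite T \<and> T \<subseteq> \<Theta> \<and> \<Theta> \<subseteq> (\<Union>t\<in>T. ball t d) \<and>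
      (\<forall>t\<in>\<Theta>. \<forall>t'\<in>\<Theta>. dist t t' < d \<longrightarrow> (\<forall>z\<in>K. \<bar>H (t,z) - H (t',z)\<bar> < \<eta> k))" for k
  proof -
    obtain d where d: "d > 0" "\<forall>t\<in>\<Theta>. \<forall>t'\<in>\<Theta>. dist t t' < d \<longrightarrow> (\<forall>z\<in>K. \<bar>H (t,z) - H (t',z)\<bar> < \<eta> k)"
      using unif_approx[OF cT cK cH \<eta>[of k]] by blast
    have "\<Theta> \<subseteq> (\<Union>t\<in>\<Theta>. ball t d)" using d(1) by auto
    then obtain T where "T \<subseteq> \<Theta>" "finite T" "\<Theta> \<subseteq> (\<Union>t\<in>T. ball t d)"
      using topological_space_class.compactE_image[OF cT, where C=\<Theta> and f="\<lambda>t. ball t d"] by auto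
    with d show ?thesis by blast
  qed
  then obtain d T where dT: "\<And>k. d k > 0 \<and> finite (T k) \<and> T k \<subseteq> \<Theta> \<and> \<Theta> \<subseteq> (\<Union>t\<in>T k. ball t (d k)) \<and>
      (\<forall>t\<in>\<Theta>. \<forall>t'\<in>\<Theta>. dist t t' < d k \<longrightarrow> (\<forall>z\<in>K. \<bar>H (t,z) - H (t',z)\<bar> < \<eta> k))"
    by metis
  have AEs: "AE \<omega> in P. \<forall>k. \<forall>t\<in>T k. eventually (\<lambda>n. \<bar>(\<Sum>j<n. tr t (X j \<omega>)) / n - (\<integral>z. tr t z \<partial>mu)\<bar> < \<eta> k) sequentially"
  proof (subst AE_all_countable, intro allI AE_finite_allI)
    fix k show "finite (T k)" using dT by blast
    fix t assume "t \<in> T k"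
    then have t: "t \<in> \<Theta>" using dT by blast
    show "AE \<omega> in P. eventually (\<lambda>n. \<bar>(\<Sum>j<n. tr t (X j \<omega>)) / n - (\<integral>z. tr t z \<partial>mu)\<bar> < \<eta> k) sequentially"
      by (rule slln_eps[OF ps Xm ind dX tr_m[OF t] tr_b \<eta>])
  qed
  show ?thesis
    using AEs XK
  proof (eventually_elim)
    case (elim \<omega>)
    note ev = elim(1) and XKw = elim(2)
    show ?case
    proof (intro allI impI)
    fix e :: real assume e: "e > 0"
    obtain k where k: "1 / real (Suc k) < e / 3" using e by (metis nat_approx_posE zero_less_divide_iff zero_less_numeral)
    have ev1: "eventually (\<lambda>n. \<forall>t'\<in>T k. \<bar>(\<Sum>j<n. tr t' (X j \<omega>)) / n - (\<integral>z. tr t' z \<partial>mu)\<bar> < \<eta> k) sequentially"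
      using ev dT by (intro eventually_ball_finite) auto
    show "eventually (\<lambda>n. \<forall>t\<in>\<Theta>. \<bar>(\<Sum>j<n. H (t, X j \<omega>)) / n - (\<integral>z. H (t,z) \<partial>mu)\<bar> < e) sequentially"
      using ev1 eventually_gt_at_top[of 0]
    proof (eventually_elim)
      case (elim n)
      note ev2 = elim(1) and n = elim(2)
      show ?case
      proof
      fix t assume t: "t \<in> \<Theta>"
      obtain t' where t': "t' \<in> T k" "t \<in> ball t' (d k)" using dT t by blast
      have t'T: "t' \<in> \<Theta>" using t' dT by blast
      have close: "\<forall>z\<in>K. \<bar>H (t,z) - H (t',z)\<bar> < \<eta> k"
        using dT t t'T t'(2) by (simp add: dist_commute)
      have a1: "(\<Sum>j<n. tr t' (X j \<omega>)) = (\<Sum>j<n. H (t', X j \<omega>))"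
        using tr_eq[OF t'T] XKw by simp
      have a2: "(\<integral>z. tr t' z \<partial>mu) = (\<integral>z. H (t',z) \<partial>mu)"
        by (rule integral_cong_AE) (use G.aeK tr_eq[OF t'T] in \<open>auto elim!: eventually_mono simp: G.meas tr_m[OF t'T] intro!: G.meas borel_measurable_continuous_onI cHt[OF t'T]\<close>)
      have b1: "\<bar>(\<Sum>j<n. H (t, X j \<omega>)) / n - (\<Sum>j<n. H (t', X j \<omega>)) / n\<bar> \<le> \<eta> k"
        using close XKw by (intro avg_close n) (auto intro: less_imp_le)
      have b2: "\<bar>(\<integral>z. H (t,z) \<partial>mu) - (\<integral>z. H (t',z) \<partial>mu)\<bar> \<le> \<eta> k"
        using close by (intro G.int_close cHt t t'T) (auto intro: less_imp_le)
      have b3: "\<bar>(\<Sum>j<n. H (t', X j \<omega>)) / n - (\<integral>z. H (t',z) \<partial>mu)\<bar> < \<eta> k"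
        using ev2 t' a1 a2 by auto
      have "\<eta> k < e / 3" using k by (simp add: \<eta>_def)
      then show "\<bar>(\<Sum>j<n. H (t, X j \<omega>)) / n - (\<integral>z. H (t,z) \<partial>mu)\<bar> < e" using b1 b2 b3 by linarith
      qed
    qed
    qed
  qed
qed

definition HZf :: "('a::euclidean_space \<times> real) \<Rightarrow> 'a \<Rightarrow> real" where
  "HZf t z = exp (- (1 / (2 * (snd t)\<^sup>2)) * (norm (fst t - z))\<^sup>2)"
definition HAf :: "('a::euclidean_space \<times> real) \<Rightarrow> 'a \<Rightarrow> real" where
  "HAf t z = (norm (fst t - z))\<^sup>2 * exp (- (1 / (2 * (snd t)\<^sup>2)) * (norm (fst t - z))\<^sup>2)"

context gm begin

lemma F_Phi:
  assumes "\<sigma> \<noteq> 0"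
  shows "F_fun \<rho> M x \<sigma> = - (1 / (2 * \<sigma>\<^sup>2)) * (\<integral>z. HAf (x,\<sigma>) z \<partial>M) / (\<integral>z. HZf (x,\<sigma>) z \<partial>M)
     - ln (\<integral>z. HZf (x,\<sigma>) z \<partial>M) + ln \<rho>"
  using assms by (simp add: F_FB FB_def AB_def ZB_def HAf_def HZf_def)

lemma HZ_bounds:
  assumes s: "\<sigma> \<ge> a" "a > 0" and R: "\<forall>z\<in>K. norm (x - z) \<le> R"
  shows "exp (- R\<^sup>2 / (2 * a\<^sup>2)) \<le> (\<integral>z. HZf (x,\<sigma>) z \<partial>M)" "(\<integral>z. HZf (x,\<sigma>) z \<partial>M) \<le> 1"
proof -
  define b where "b = 1 / (2 * \<sigma>\<^sup>2)"
  have b0: "b \<ge> 0" by (simp add: b_def)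
  have "\<sigma>\<^sup>2 \<ge> a\<^sup>2" using s by (intro power_mono) auto
  then have bl: "b \<le> 1 / (2 * a\<^sup>2)" unfolding b_def using s by (intro divide_left_mono) auto
  have eq: "(\<integral>z. HZf (x,\<sigma>) z \<partial>M) = (\<integral>z. exp (- b * (norm (x - z))\<^sup>2) \<partial>M)"
    by (simp add: HZf_def b_def)
  show "(\<integral>z. HZf (x,\<sigma>) z \<partial>M) \<le> 1"
    unfolding eq using b0 by (intro integral_le_const int_e AE_I2) (auto simp: mult_nonneg_nonneg)
  have "exp (- R\<^sup>2 / (2 * a\<^sup>2)) \<le> (\<integral>z. exp (- b * (norm (x - z))\<^sup>2) \<partial>M)"
  proof (rule integral_ge_const[OF int_e])
    show "AE z in M. exp (- R\<^sup>2 / (2 * a\<^sup>2)) \<le> exp (- b * (norm (x - z))\<^sup>2)"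
      using aeK
    proof eventually_elim
      case (elim z)
      then have "norm (x - z) \<le> R" using R by auto
      then have D: "(norm (x - z))\<^sup>2 \<le> R\<^sup>2" by (intro power_mono) auto
      have "b * (norm (x - z))\<^sup>2 \<le> (1 / (2 * a\<^sup>2)) * R\<^sup>2"
        using D bl b0 by (intro mult_mono) auto
      then show ?case by simp
    qed
  qed
  then show "exp (- R\<^sup>2 / (2 * a\<^sup>2)) \<le> (\<integral>z. HZf (x,\<sigma>) z \<partial>M)" unfolding eq .
qed

lemma HA_bounds:
  assumes R: "\<forall>z\<in>K. norm (x - z) \<le> R"
  shows "0 \<le> (\<integral>z. HAf (x,\<sigma>) z \<partial>M)" "(\<integral>z. HAf (x,\<sigma>) z \<partial>M) \<le> R\<^sup>2"
proof -
  have eq: "(\<integral>z. HAf (x,\<sigma>) z \<partial>M) = (\<integral>z. (norm (x - z))\<^sup>2 * exp (- (1 / (2 * \<sigma>\<^sup>2)) * (norm (x - z))\<^sup>2) \<partial>M)"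
    by (simp add: HAf_def)
  show "0 \<le> (\<integral>z. HAf (x,\<sigma>) z \<partial>M)" unfolding eq by (rule integral_nonneg_AE) auto
  show "(\<integral>z. HAf (x,\<sigma>) z \<partial>M) \<le> R\<^sup>2"
    unfolding eq
  proof (rule integral_le_const[OF int_De])
    show "AE z in M. (norm (x - z))\<^sup>2 * exp (- (1 / (2 * \<sigma>\<^sup>2)) * (norm (x - z))\<^sup>2) \<le> R\<^sup>2"
      using aeK
    proof eventually_elim
      case (elim z)
      then have "norm (x - z) \<le> R" using R by auto
      then have D: "(norm (x - z))\<^sup>2 \<le> R\<^sup>2" by (intro power_mono) auto
      have "exp (- (1 / (2 * \<sigma>\<^sup>2)) * (norm (x - z))\<^sup>2) \<le> 1" by simp
      then have "(norm (x - z))\<^sup>2 * exp (- (1 / (2 * \<sigma>\<^sup>2)) * (norm (x - z))\<^sup>2) \<le> (norm (x - z))\<^sup>2 * 1"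
        by (intro mult_left_mono) auto
      then show ?case using D by simp
    qed
  qed
qed

end

context muset begin

definition Th :: "nat \<Rightarrow> ('a \<times> real) set" where
  "Th k = K0 \<times> {1 / real (Suc k) .. real (Suc k)}"

lemma det_part:
  assumes Xin: "\<forall>j. f (xs j) > 0"
    and UZ: "\<forall>k. \<forall>e>0. eventually (\<lambda>n. \<forall>t\<in>Th k. \<bar>(\<Sum>j<n. HZf t (xs j)) / n - (\<integral>z. HZf t z \<partial>mu)\<bar> < e) sequentially"
    and UA: "\<forall>k. \<forall>e>0. eventually (\<lambda>n. \<forall>t\<in>Th k. \<bar>(\<Sum>j<n. HAf t (xs j)) / n - (\<integral>z. HAf t z \<partial>mu)\<bar> < e) sequentially"
    and e: "e > 0"
  shows "eventually (\<lambda>n. 0 < n \<and> (\<forall>i<n. \<bar>sigma_star \<rho> (emp_measure xs n) (xs i) - sigma_star \<rho> mu (xs i)\<bar> \<le> e)) sequentially"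
proof -
  interpret G: gm mu K by (rule gm_mu)
  have xK0: "xs j \<in> K0" for j using Xin unfolding K0_def by (auto intro: closure_subset[THEN subsetD])
  have xK: "xs j \<in> K" for j using xK0 K0_sub by auto
  obtain B where B: "B > 0" "\<forall>z\<in>K. norm z \<le> B"
    using compact_imp_bounded[OF cK] unfolding bounded_pos by auto
  define R where "R = 2 * B"
  have Rb: "\<forall>z\<in>K. norm (x - z) \<le> R" if "x \<in> K" for x
  proof
    fix z assume "z \<in> K"
    then have "norm (x - z) \<le> norm x + norm z" by (simp add: norm_triangle_ineq4)
    moreover have "norm x \<le> B" "norm z \<le> B" using B \<open>z \<in> K\<close> that by auto
    ultimately show "norm (x - z) \<le> R" by (simp add: R_def)
  qed
  have loc: "\<exists>r>0. \<exists>\<delta>>0. \<exists>a b. 0 < a \<and> a < b \<and> b - a \<le> e \<and>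
      (\<forall>y\<in>K0. dist y x0 < r \<longrightarrow> F_fun \<rho> mu y a > \<delta> \<and> F_fun \<rho> mu y b < - \<delta>)" if x0: "x0 \<in> K0" for x0
  proof -
    define s0 where "s0 = sigma_star \<rho> mu x0"
    have s0: "0 < s0" "F_fun \<rho> mu x0 s0 = 0" using sigma_mu[OF x0] by (auto simp: s0_def)
    define \<eta> where "\<eta> = min e s0 / 2"
    have \<eta>: "\<eta> > 0" "\<eta> \<le> s0 / 2" "2 * \<eta> \<le> e" using e s0 by (auto simp: \<eta>_def)
    define a where "a = s0 - \<eta>"
    define b where "b = s0 + \<eta>"
    have ab: "0 < a" "a < b" "b - a \<le> e" "a < s0" "s0 < b" using \<eta> s0 by (auto simp: a_def b_def)
    have Fa: "F_fun \<rho> mu x0 a > 0" using G.root_props(2)[OF r0 r1 s0(1,2) ab(1,4)] .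
    have Fb: "F_fun \<rho> mu x0 b < 0" using G.root_props(3)[OF r0 r1 s0(1,2) ab(5)] .
    define \<delta> where "\<delta> = min (F_fun \<rho> mu x0 a) (- F_fun \<rho> mu x0 b) / 2"
    have \<delta>: "\<delta> > 0" "2 * \<delta> \<le> F_fun \<rho> mu x0 a" "2 * \<delta> \<le> - F_fun \<rho> mu x0 b"
      using Fa Fb by (auto simp: \<delta>_def)
    have contc: "continuous_on K0 (\<lambda>y. F_fun \<rho> mu y c)" if "c > 0" for c
    proof -
      have "continuous_on K0 (\<lambda>y. (\<lambda>t. F_fun \<rho> mu (fst t) (snd t)) (y, c))"
        by (rule continuous_on_compose2[OF G.F_cont[OF that K0_compact, where b=c and \<rho>=\<rho>]])
           (auto intro!: continuous_intros)
      then show ?thesis by simp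
    qed
    obtain d1 where d1: "d1 > 0" "\<forall>y\<in>K0. dist y x0 < d1 \<longrightarrow> dist (F_fun \<rho> mu y a) (F_fun \<rho> mu x0 a) < \<delta>"
      using contc[OF ab(1)] x0 \<delta>(1) unfolding continuous_on_iff by metis
    obtain d2 where d2: "d2 > 0" "\<forall>y\<in>K0. dist y x0 < d2 \<longrightarrow> dist (F_fun \<rho> mu y b) (F_fun \<rho> mu x0 b) < \<delta>"
      using contc[of b] ab x0 \<delta>(1) unfolding continuous_on_iff by (metis order.strict_trans)
    have all: "\<forall>y\<in>K0. dist y x0 < min d1 d2 \<longrightarrow> F_fun \<rho> mu y a > \<delta> \<and> F_fun \<rho> mu y b < - \<delta>"
    proof (intro ballI impI conjI)
      fix y assume y: "y \<in> K0" "dist y x0 < min d1 d2"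
      have "dist (F_fun \<rho> mu y a) (F_fun \<rho> mu x0 a) < \<delta>" using d1(2) y by auto
      then show "F_fun \<rho> mu y a > \<delta>" using \<delta> by (simp add: dist_real_def abs_less_iff)
      have "dist (F_fun \<rho> mu y b) (F_fun \<rho> mu x0 b) < \<delta>" using d2(2) y by auto
      then show "F_fun \<rho> mu y b < - \<delta>" using \<delta> by (simp add: dist_real_def abs_less_iff)
    qed
    have "min d1 d2 > 0" using d1 d2 by simp
    then show ?thesis using all \<delta>(1) ab(1-3) by blast
  qed
  then obtain r \<delta> a b where rdab: "\<And>x0. x0 \<in> K0 \<Longrightarrow> r x0 > 0 \<and> \<delta> x0 > 0 \<and> 0 < a x0 \<and> a x0 < b x0 \<and> b x0 - a x0 \<le> e \<and>
      (\<forall>y\<in>K0. dist y x0 < r x0 \<longrightarrow> F_fun \<rho> mu y (a x0) > \<delta> x0 \<and> F_fun \<rho> mu y (b x0) < - \<delta> x0)"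
    by metis
  have "K0 \<subseteq> (\<Union>x0\<in>K0. ball x0 (r x0))" using rdab by force
  then obtain C where C: "C \<subseteq> K0" "finite C" "K0 \<subseteq> (\<Union>x0\<in>C. ball x0 (r x0))"
    using topological_space_class.compactE_image[OF K0_compact, where C=K0 and f="\<lambda>x0. ball x0 (r x0)"] by auto
  have Cne: "C \<noteq> {}" using C(3) xK0[of 0] by auto
  define dm where "dm = Min (\<delta> ` C)"
  define am where "am = Min (a ` C)"
  define bm where "bm = Max (b ` C)"
  have dm: "dm > 0" "\<And>x0. x0 \<in> C \<Longrightarrow> dm \<le> \<delta> x0"
    using C Cne rdab by (auto simp: dm_def)
  have am: "am > 0" "\<And>x0. x0 \<in> C \<Longrightarrow> am \<le> a x0"
    using C Cne rdab by (auto simp: am_def)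
  have bm: "\<And>x0. x0 \<in> C \<Longrightarrow> b x0 \<le> bm"
    using C Cne by (auto simp: bm_def)
  obtain k1 where k1: "1 / real (Suc k1) < am" using am(1) nat_approx_posE by blast
  obtain k2 where k2: "bm \<le> real (Suc k2)" by (meson less_imp_le real_arch_simple order_trans of_nat_le_iff le_SucI le_refl)
  define k where "k = max k1 k2"
  have k: "1 / real (Suc k) \<le> am" "bm \<le> real (Suc k)"
  proof -
    have "1 / real (Suc k) \<le> 1 / real (Suc k1)" by (simp add: k_def frac_le)
    then show "1 / real (Suc k) \<le> am" using k1 by simp
    show "bm \<le> real (Suc k)" using k2 by (simp add: k_def)
  qed
  have ThC: "y \<in> K0 \<Longrightarrow> am \<le> \<sigma> \<Longrightarrow> \<sigma> \<le> bm \<Longrightarrow> (y, \<sigma>) \<in> Th k" for y \<sigma>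
    using k by (auto simp: Th_def)
  \<comment> \<open>uniform continuity of the map (Z, A, sigma) to F\<close>
  define zlo where "zlo = exp (- R\<^sup>2 / (2 * am\<^sup>2))"
  have zlo: "zlo > 0" by (simp add: zlo_def)
  define Q where "Q = {zlo..1} \<times> {0..R\<^sup>2} \<times> {am..bm}"
  define Phi where "Phi p = - (1 / (2 * (snd (snd p))\<^sup>2)) * fst (snd p) / fst p - ln (fst p) + ln \<rho>" for p :: "real \<times> real \<times> real"
  have "continuous_on Q Phi"
    unfolding Phi_def Q_def using zlo am(1)
    by (intro continuous_intros) (auto simp: less_eq_real_def)
  then have "uniformly_continuous_on Q Phi"
    by (intro compact_uniformly_continuous) (auto simp: Q_def intro!: compact_Times)
  then obtain \<eta> where \<eta>: "\<eta> > 0" "\<And>p p'. p \<in> Q \<Longrightarrow> p' \<in> Q \<Longrightarrow> dist p' p < \<eta> \<Longrightarrow> dist (Phi p') (Phi p) < dm"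
    using dm(1) unfolding uniformly_continuous_on_def by metis
  have \<eta>2: "\<eta> / 2 > 0" using \<eta> by simp
  have ev: "eventually (\<lambda>n. (\<forall>t\<in>Th k. \<bar>(\<Sum>j<n. HZf t (xs j)) / n - (\<integral>z. HZf t z \<partial>mu)\<bar> < \<eta> / 2)
      \<and> (\<forall>t\<in>Th k. \<bar>(\<Sum>j<n. HAf t (xs j)) / n - (\<integral>z. HAf t z \<partial>mu)\<bar> < \<eta> / 2) \<and> 0 < n) sequentially"
    using UZ[rule_format, OF \<eta>2, of k] UA[rule_format, OF \<eta>2, of k] eventually_gt_at_top[of 0]
    by (intro eventually_conj) auto
  then show ?thesis
  proof eventually_elim
    case (elim n)
    note UZn = elim[THEN conjunct1] and UAn = elim[THEN conjunct2, THEN conjunct1]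
      and n = elim[THEN conjunct2, THEN conjunct2]
    interpret Gn: gm "emp_measure xs n" K by (rule emp_gm) (use n xK cK in auto)
    have close: "\<bar>F_fun \<rho> (emp_measure xs n) y \<sigma> - F_fun \<rho> mu y \<sigma>\<bar> < dm"
      if y: "y \<in> K0" and s: "am \<le> \<sigma>" "\<sigma> \<le> bm" for y \<sigma>
    proof -
      have s0: "\<sigma> > 0" using s am by simp
      have yK: "y \<in> K" using y K0_sub by auto
      define Zm where "Zm = (\<integral>z. HZf (y,\<sigma>) z \<partial>mu)"
      define Am where "Am = (\<integral>z. HAf (y,\<sigma>) z \<partial>mu)"
      define Zn where "Zn = (\<integral>z. HZf (y,\<sigma>) z \<partial>emp_measure xs n)"
      define An where "An = (\<integral>z. HAf (y,\<sigma>) z \<partial>emp_measure xs n)"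
      have Fm: "F_fun \<rho> mu y \<sigma> = Phi (Zm, Am, \<sigma>)"
        using G.F_Phi[of \<sigma> \<rho> y] s0 by (simp add: Phi_def Zm_def Am_def)
      have Fn: "F_fun \<rho> (emp_measure xs n) y \<sigma> = Phi (Zn, An, \<sigma>)"
        using Gn.F_Phi[of \<sigma> \<rho> y] s0 by (simp add: Phi_def Zn_def An_def)
      have pm: "(Zm, Am, \<sigma>) \<in> Q"
        using G.HZ_bounds[OF s(1) am(1) Rb[OF yK]] G.HA_bounds[OF Rb[OF yK], of \<sigma>] s
        by (simp add: Q_def Zm_def Am_def zlo_def)
      have pn: "(Zn, An, \<sigma>) \<in> Q"
        using Gn.HZ_bounds[OF s(1) am(1) Rb[OF yK]] Gn.HA_bounds[OF Rb[OF yK], of \<sigma>] s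
        by (simp add: Q_def Zn_def An_def zlo_def)
      have th: "(y, \<sigma>) \<in> Th k" by (rule ThC[OF y s])
      have dZ: "\<bar>Zn - Zm\<bar> < \<eta> / 2"
        using UZn th n by (simp add: Zn_def Zm_def emp_integral)
      have dA: "\<bar>An - Am\<bar> < \<eta> / 2"
        using UAn th n by (simp add: An_def Am_def emp_integral)
      have "dist (Zn, An, \<sigma>) (Zm, Am, \<sigma>) = sqrt ((dist Zn Zm)\<^sup>2 + (dist An Am)\<^sup>2)"
        by (simp add: dist_Pair_Pair)
      also have "\<dots> \<le> \<bar>dist Zn Zm\<bar> + \<bar>dist An Am\<bar>" by (rule sqrt_sum_squares_le_sum_abs)
      also have "\<dots> < \<eta>" using dZ dA by (simp add: dist_real_def)
      finally have "dist (Phi (Zn, An, \<sigma>)) (Phi (Zm, Am, \<sigma>)) < dm" by (intro \<eta>(2) pm pn)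
      then show ?thesis using Fm Fn by (simp add: dist_real_def)
    qed
    show ?case
    proof (intro conjI allI impI n)
      fix i assume "i < n"
      define y where "y = xs i"
      have y: "y \<in> K0" by (simp add: y_def xK0)
      obtain x0 where x0: "x0 \<in> C" "y \<in> ball x0 (r x0)" using C(3) y by auto
      have x0K: "x0 \<in> K0" using x0 C by auto
      note R0 = rdab[OF x0K]
      have dy: "dist y x0 < r x0" using x0(2) by (simp add: dist_commute)
      have Fa: "F_fun \<rho> mu y (a x0) > \<delta> x0" and Fb: "F_fun \<rho> mu y (b x0) < - \<delta> x0" using R0 y dy by auto
      have rng: "am \<le> a x0" "b x0 \<le> bm" "0 < a x0" "a x0 < b x0" "b x0 - a x0 \<le> e"
        using am(2)[OF x0(1)] bm[OF x0(1)] R0 by auto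
      have dmx: "dm \<le> \<delta> x0" by (rule dm(2)[OF x0(1)])
      have Fna: "F_fun \<rho> (emp_measure xs n) y (a x0) > 0"
        using close[OF y rng(1) order.trans[OF less_imp_le[OF rng(4)] rng(2)]] Fa dmx unfolding abs_less_iff by linarith
      have Fnb: "F_fun \<rho> (emp_measure xs n) y (b x0) < 0"
        using close[OF y order.trans[OF rng(1) less_imp_le[OF rng(4)]] rng(2)] Fb dmx unfolding abs_less_iff by linarith
      note bn = Gn.bracket[OF r0 r1 rng(3,4) Fna Fnb]
      have sm: "0 < sigma_star \<rho> mu y" "F_fun \<rho> mu y (sigma_star \<rho> mu y) = 0" using sigma_mu[OF y] by auto
      have "a x0 < sigma_star \<rho> mu y"
      proof (rule ccontr)
        assume "\<not> a x0 < sigma_star \<rho> mu y"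
        then have "F_fun \<rho> mu y (a x0) \<le> F_fun \<rho> mu y (sigma_star \<rho> mu y)"
          using G.F_mono_sigma[OF sm(1)] by simp
        then show False using Fa sm R0 by simp
      qed
      moreover have "sigma_star \<rho> mu y < b x0"
      proof (rule ccontr)
        assume "\<not> sigma_star \<rho> mu y < b x0"
        then have "F_fun \<rho> mu y (sigma_star \<rho> mu y) \<le> F_fun \<rho> mu y (b x0)"
          using G.F_mono_sigma[of "b x0" "sigma_star \<rho> mu y" \<rho> y] rng by simp
        then show False using Fb sm R0 by simp
      qed
      ultimately show "\<bar>sigma_star \<rho> (emp_measure xs n) (xs i) - sigma_star \<rho> mu (xs i)\<bar> \<le> e"
        using bn rng by (simp add: y_def[symmetric] abs_le_iff)
    qed
  qed
qed

end

theorem proposition3p9: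
  fixes \<mu> :: "'a::euclidean_space measure"
    and f :: "'a \<Rightarrow> real"
    and \<rho> :: real
    and P :: "'b measure"
    and X :: "nat \<Rightarrow> 'b \<Rightarrow> 'a"
  assumes "prob_space \<mu>"
    and "\<forall>x. f x \<ge> 0"
    and "C1_real f"
    and "\<mu> = density lborel (\<lambda>x. ennreal (f x))"
    and "\<exists>K. compact K \<and> emeasure \<mu> (UNIV - K) = 0"
    and "0 < \<rho>" and "\<rho> < 1"
    and "prob_space P"
    and "\<forall>i. X i \<in> borel_measurable P"
    and "prob_space.indep_vars P (\<lambda>_. borel) X UNIV"
    and "\<forall>i. distr P borel (X i) = \<mu>"
  shows "AE \<omega> in P.
    (\<lambda>n. Max ((\<lambda>i. \<bar>sigma_star \<rho> (emp_measure (\<lambda>j. X j \<omega>) n) (X i \<omega>)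
                       - sigma_star \<rho> \<mu> (X i \<omega>)\<bar>) ` {..<n}))
    \<longlonglongrightarrow> 0"
proof -
  obtain K where K: "compact K" "emeasure \<mu> (UNIV - K) = 0" using assms(5) by blast
  have fc: "continuous_on UNIV f"
  proof -
    obtain f' :: "'a \<Rightarrow> 'a \<Rightarrow>\<^sub>L real" where "\<forall>x. (f has_derivative blinfun_apply (f' x)) (at x)"
      using assms(3) unfolding C1_real_def by blast
    then have "\<forall>x. isCont f x" using has_derivative_continuous by blast
    then show ?thesis by (simp add: continuous_at_imp_continuous_on)
  qed
  interpret U: muset \<mu> f \<rho> K
    by (rule muset.intro[OF assms(1) assms(2) fc assms(4) K assms(6) assms(7)])
  interpret G: gm \<mu> K by (rule U.gm_mu)
  have Xm[measurable]: "X i \<in> borel_measurable P" for i using assms(9) by auto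
  have XS: "AE \<omega> in P. \<forall>j. f (X j \<omega>) > 0"
  proof (subst AE_all_countable, intro allI)
    fix j
    have A1: "AE y in density lborel (\<lambda>x. ennreal (f x)). f y > 0"
      by (subst AE_density) (auto simp: U.fmeas)
    have A2: "distr P borel (X j) = density lborel (\<lambda>x. ennreal (f x))" using assms(4,11) by simp
    have "AE y in distr P borel (X j). f y > 0" unfolding A2 by (rule A1)
    then show "AE \<omega> in P. f (X j \<omega>) > 0" by (rule AE_distrD[OF Xm])
  qed
  have XK: "AE \<omega> in P. \<forall>j. X j \<omega> \<in> K" using XS by eventually_elim (auto intro: U.S_sub_K)
  have cT: "compact (U.Th k)" for k unfolding U.Th_def by (intro compact_Times U.K0_compact compact_Icc)
  have Thpos: "t \<in> U.Th k \<Longrightarrow> snd t > 0" for t k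
  proof -
    assume "t \<in> U.Th k"
    then have "1 / real (Suc k) \<le> snd t" unfolding U.Th_def by auto
    moreover have "0 < 1 / real (Suc k)" by simp
    ultimately show "snd t > 0" by linarith
  qed
  have UZ: "AE \<omega> in P. \<forall>k. \<forall>e>0. eventually (\<lambda>n. \<forall>t\<in>U.Th k. \<bar>(\<Sum>j<n. HZf t (X j \<omega>)) / n - (\<integral>z. HZf t z \<partial>\<mu>)\<bar> < e) sequentially"
  proof (subst AE_all_countable, intro allI)
    fix k
    have "AE \<omega> in P. \<forall>e>0. eventually (\<lambda>n. \<forall>t\<in>U.Th k. \<bar>(\<Sum>j<n. (\<lambda>p. HZf (fst p) (snd p)) (t, X j \<omega>)) / n - (\<integral>z. (\<lambda>p. HZf (fst p) (snd p)) (t,z) \<partial>\<mu>)\<bar> < e) sequentially"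
    proof (rule ulln[OF assms(8,9,10,11) U.gm_mu cT])
      show "continuous_on (U.Th k \<times> K) (\<lambda>p. HZf (fst p) (snd p))"
        unfolding HZf_def using Thpos by (auto intro!: continuous_intros simp: less_imp_neq[symmetric])
      show "continuous_on UNIV (\<lambda>z. HZf (fst (t, z)) (snd (t, z)))" if "t \<in> U.Th k" for t
        using Thpos[OF that] unfolding HZf_def by (auto intro!: continuous_intros)
      show "AE \<omega> in P. \<forall>j. X j \<omega> \<in> K" by (rule XK)
    qed
    then show "AE \<omega> in P. \<forall>e>0. eventually (\<lambda>n. \<forall>t\<in>U.Th k. \<bar>(\<Sum>j<n. HZf t (X j \<omega>)) / n - (\<integral>z. HZf t z \<partial>\<mu>)\<bar> < e) sequentially"
      by simp
  qed
  have UA: "AE \<omega> in P. \<forall>k. \<forall>e>0. eventually (\<lambda>n. \<forall>t\<in>U.Th k. \<bar>(\<Sum>j<n. HAf t (X j \<omega>)) / n - (\<integral>z. HAf t z \<partial>\<mu>)\<bar> < e) sequentially"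
  proof (subst AE_all_countable, intro allI)
    fix k
    have "AE \<omega> in P. \<forall>e>0. eventually (\<lambda>n. \<forall>t\<in>U.Th k. \<bar>(\<Sum>j<n. (\<lambda>p. HAf (fst p) (snd p)) (t, X j \<omega>)) / n - (\<integral>z. (\<lambda>p. HAf (fst p) (snd p)) (t,z) \<partial>\<mu>)\<bar> < e) sequentially"
    proof (rule ulln[OF assms(8,9,10,11) U.gm_mu cT])
      show "continuous_on (U.Th k \<times> K) (\<lambda>p. HAf (fst p) (snd p))"
        unfolding HAf_def using Thpos by (auto intro!: continuous_intros simp: less_imp_neq[symmetric])
      show "continuous_on UNIV (\<lambda>z. HAf (fst (t, z)) (snd (t, z)))" if "t \<in> U.Th k" for t
        using Thpos[OF that] unfolding HAf_def by (auto intro!: continuous_intros)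
      show "AE \<omega> in P. \<forall>j. X j \<omega> \<in> K" by (rule XK)
    qed
    then show "AE \<omega> in P. \<forall>e>0. eventually (\<lambda>n. \<forall>t\<in>U.Th k. \<bar>(\<Sum>j<n. HAf t (X j \<omega>)) / n - (\<integral>z. HAf t z \<partial>\<mu>)\<bar> < e) sequentially"
      by simp
  qed
  show ?thesis
    using XS UZ UA
  proof eventually_elim
    case (elim \<omega>)
    show ?case unfolding tendsto_iff
    proof (intro allI impI)
      fix e :: real assume e: "e > 0"
      have "eventually (\<lambda>n. 0 < n \<and> (\<forall>i<n. \<bar>sigma_star \<rho> (emp_measure (\<lambda>j. X j \<omega>) n) (X i \<omega>) - sigma_star \<rho> \<mu> (X i \<omega>)\<bar> \<le> e / 2)) sequentially"
        using U.det_part[of "\<lambda>j. X j \<omega>" "e / 2"] elim e by simp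
      then show "eventually (\<lambda>n. dist (Max ((\<lambda>i. \<bar>sigma_star \<rho> (emp_measure (\<lambda>j. X j \<omega>) n) (X i \<omega>)
                       - sigma_star \<rho> \<mu> (X i \<omega>)\<bar>) ` {..<n})) 0 < e) sequentially"
      proof eventually_elim
        case (elim n)
        define A where "A = (\<lambda>i. \<bar>sigma_star \<rho> (emp_measure (\<lambda>j. X j \<omega>) n) (X i \<omega>) - sigma_star \<rho> \<mu> (X i \<omega>)\<bar>) ` {..<n}"
        have fin: "finite A" "A \<noteq> {}" using elim by (auto simp: A_def)
        have "Max A \<le> e / 2" using elim fin by (subst Max_le_iff) (auto simp: A_def)
        moreover have "0 \<le> Max A"
        proof -
          obtain a where "a \<in> A" using fin by auto
          moreover have "0 \<le> a" using \<open>a \<in> A\<close> by (auto simp: A_def)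
          ultimately show ?thesis using Max_ge[OF fin(1)] order_trans by blast
        qed
        ultimately show ?case using e by (simp add: A_def[symmetric] dist_real_def)
      qed
    qed
  qed
qed

end
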